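(* Consider the switching retarded system $\Sigma_r=(\mathcal{C},\mathrm{PC},\phi)$ described in the context, and suppose there exists $L>0$ such that $|f_q(\psi_1)-f_q(\psi_2)|\le L\|\psi_1-\psi_2\|$ for all $\psi_1,\psi_2\in\mathcal{C}$ and $q\in\mathcal{Q}$. Then the following are equivalent: (i) $\Sigma_r$ is UGES; (ii) there exist a continuous functional $V:\mathcal{C}\to\mathbb{R}_+$ and positive reals $p,\underline{c},\overline{c}$ such that $\underline{c}\|\psi\|^p\le V(\psi)\le\overline{c}\|\psi\|^p$ for all $\psi\in\mathcal{C}$ and $\overline{D}_qV(\psi)\le-\|\psi\|^p$ for all $\psi\in\mathcal{C}$, $q\in\mathcal{Q}$; (iii) there exist a functional $V:\mathcal{C}\to\mathbb{R}_+$ and positive reals $p,c$ such that for every $\psi\in\mathcal{C}$ and $q\in\mathcal{Q}$ the map $t\mapsto V(T_q(t)\psi)$ is continuous from the left, $\overline{D}_qV(\psi)\le-\|\psi\|^p$ for all $\psi\in\mathcal{C}$, $q\in\mathcal{Q}$, and $V(\psi)\le c\|\psi\|^p$ for all $\psi\in\mathcal{C}$.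
   Context: Let $r\ge0$, $n\ge1$, and $\mathcal{C}=\mathcal{C}([-r,0],\mathbb{R}^n)$ with the sup norm $\|\cdot\|$. Let $\mathcal{Q}$ be a nonempty set and for each $q\in\mathcal{Q}$ let $f_q:\mathcal{C}\to\mathbb{R}^n$ be continuous with $f_q(0)=0$. Consider $\dot x(t)=f_{\sigma(t)}(x_t)$, $t\ge0$, $x(\theta)=\varphi(\theta)$ for $\theta\in[-r,0]$, with $\varphi\in\mathcal{C}$, where $x_t(\theta)=x(t+\theta)$, $\theta\in[-r,0]$, and $\sigma$ belongs to the set $\mathrm{PC}$ of piecewise constant functions $\mathbb{R}_+\to\mathcal{Q}$. Assume that for every $q\in\mathcal{Q}$ and $\varphi\in\mathcal{C}$ the system with $\sigma\equiv q$ has a unique solution on $[-r,+\infty)$, and set $T_q(t)\varphi=x_t$ (a strongly continuous nonlinear semigroup on $\mathcal{C}$). For $\sigma\in\mathrm{PC}$ equal to $\sigma_k$ on $[t_k,t_{k+1})$ with $0=t_0<t_1<\cdots$, define $\phi(t,\varphi,\sigma)=T_{\sigma_k}(t-t_k)T_{\sigma_{k-1}}(t_k-t_{k-1})\cdots T_{\sigma_0}(t_1)\varphi$ for $t\in[t_k,t_{k+1})$; this gives $\Sigma_r=(\mathcal{C},\mathrm{PC},\phi)$. $\Sigma_r$ is UGES if there exist $M,\lambda>0$ with $\|\phi(t,\varphi,\sigma)\|\le Me^{-\lambda t}\|\varphi\|$ for all $t\ge0$, $\varphi\in\mathcal{C}$, $\sigma\in\mathrm{PC}$. For $q\in\mathcal{Q}$,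 $\overline{D}_qV(\psi)=\limsup_{h\downarrow0}\frac1h\big(V(T_q(h)\psi)-V(\psi)\big)$. *)

theory Defs
  imports "HOL-Analysis.Analysis"
begin

text \<open>The phase space C([-r,0],R^n). Elements are represented as functions
  real => real^'n that are continuous on [-r,0] and normalised to 0 outside [-r,0].\<close>
definition CC :: "real \<Rightarrow> (real \<Rightarrow> real^'n) set" where
  "CC r = {\<phi>. continuous_on {-r..0} \<phi> \<and> (\<forall>\<theta>. \<theta> \<notin> {-r..0} \<longrightarrow> \<phi> \<theta> = 0)}"

definition cnorm :: "real \<Rightarrow> (real \<Rightarrow> real^'n) \<Rightarrow> real" where
  "cnorm r \<phi> = (SUP \<theta>\<in>{-r..0}. norm (\<phi> \<theta>))"

definition ccont :: "real \<Rightarrow> ((real \<Rightarrow> real^'n) \<Rightarrow> 'b::metric_space) \<Rightarrow> bool" where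
  "ccont r F \<longleftrightarrow> (\<forall>\<phi>\<in>CC r. \<forall>\<epsilon>>0. \<exists>\<delta>>0. \<forall>\<psi>\<in>CC r.
      cnorm r (\<psi> - \<phi>) < \<delta> \<longrightarrow> dist (F \<psi>) (F \<phi>) < \<epsilon>)"

definition seg :: "real \<Rightarrow> (real \<Rightarrow> real^'n) \<Rightarrow> real \<Rightarrow> (real \<Rightarrow> real^'n)" where
  "seg r x t = (\<lambda>\<theta>. if \<theta> \<in> {-r..0} then x (t + \<theta>) else 0)"

definition is_sol :: "real \<Rightarrow> ('q \<Rightarrow> (real \<Rightarrow> real^'n) \<Rightarrow> real^'n) \<Rightarrow> 'q
    \<Rightarrow> (real \<Rightarrow> real^'n) \<Rightarrow> (real \<Rightarrow> real^'n) \<Rightarrow> bool" where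
  "is_sol r f q \<phi> x \<longleftrightarrow>
     (\<forall>\<theta>\<in>{-r..0}. x \<theta> = \<phi> \<theta>) \<and> continuous_on {-r..} x \<and>
     (\<forall>t\<ge>0. (x has_vector_derivative f q (seg r x t)) (at t within {0..}))"

definition Tsg :: "real \<Rightarrow> ('q \<Rightarrow> (real \<Rightarrow> real^'n) \<Rightarrow> real^'n) \<Rightarrow> 'q
    \<Rightarrow> real \<Rightarrow> (real \<Rightarrow> real^'n) \<Rightarrow> (real \<Rightarrow> real^'n)" where
  "Tsg r f q t \<phi> = seg r (SOME x. is_sol r f q \<phi> x) t"

definition PC_part :: "(real \<Rightarrow> 'q) \<Rightarrow> (nat \<Rightarrow> real) \<Rightarrow> bool" where
  "PC_part \<sigma> ts \<longleftrightarrow> ts 0 = 0 \<and> strict_mono ts \<and> filterlim ts at_top sequentially \<and>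
     (\<forall>k. \<forall>t\<in>{ts k..<ts (Suc k)}. \<sigma> t = \<sigma> (ts k))"

definition PC :: "(real \<Rightarrow> 'q) set" where
  "PC = {\<sigma>. \<exists>ts. PC_part \<sigma> ts}"

fun flow_at :: "real \<Rightarrow> ('q \<Rightarrow> (real \<Rightarrow> real^'n) \<Rightarrow> real^'n) \<Rightarrow> (real \<Rightarrow> 'q)
    \<Rightarrow> (nat \<Rightarrow> real) \<Rightarrow> nat \<Rightarrow> (real \<Rightarrow> real^'n) \<Rightarrow> (real \<Rightarrow> real^'n)" where
  "flow_at r f \<sigma> ts 0 \<phi> = \<phi>"
| "flow_at r f \<sigma> ts (Suc k) \<phi> =
     Tsg r f (\<sigma> (ts k)) (ts (Suc k) - ts k) (flow_at r f \<sigma> ts k \<phi>)"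

definition flow :: "real \<Rightarrow> ('q \<Rightarrow> (real \<Rightarrow> real^'n) \<Rightarrow> real^'n)
    \<Rightarrow> real \<Rightarrow> (real \<Rightarrow> real^'n) \<Rightarrow> (real \<Rightarrow> 'q) \<Rightarrow> (real \<Rightarrow> real^'n)" where
  "flow r f t \<phi> \<sigma> =
     (let ts = (SOME ts. PC_part \<sigma> ts);
          k = (SOME k. t \<in> {ts k..<ts (Suc k)})
      in Tsg r f (\<sigma> (ts k)) (t - ts k) (flow_at r f \<sigma> ts k \<phi>))"

definition UGES :: "real \<Rightarrow> ('q \<Rightarrow> (real \<Rightarrow> real^'n) \<Rightarrow> real^'n) \<Rightarrow> bool" where
  "UGES r f \<longleftrightarrow> (\<exists>M>0. \<exists>lam>0. \<forall>t\<ge>0. \<forall>\<phi>\<in>CC r. \<forall>\<sigma>\<in>PC.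
      cnorm r (flow r f t \<phi> \<sigma>) \<le> M * exp (- lam * t) * cnorm r \<phi>)"

definition Dini_up :: "real \<Rightarrow> ('q \<Rightarrow> (real \<Rightarrow> real^'n) \<Rightarrow> real^'n) \<Rightarrow> 'q
    \<Rightarrow> ((real \<Rightarrow> real^'n) \<Rightarrow> real) \<Rightarrow> (real \<Rightarrow> real^'n) \<Rightarrow> ereal" where
  "Dini_up r f q V \<psi> =
     Limsup (at_right 0) (\<lambda>h. ereal ((V (Tsg r f q h \<psi>) - V \<psi>) / h))"

end

theory Submission
  imports Defs
begin

section \<open>Basic facts on C and the sup norm\<close>

lemma CC_cont: "\<phi> \<in> CC r \<Longrightarrow> continuous_on {-r..0} \<phi>"
  by (simp add: CC_def)

lemma CC_out: "\<phi> \<in> CC r \<Longrightarrow> \<theta> \<notin> {-r..0} \<Longrightarrow> \<phi> \<theta> = 0"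
  by (simp add: CC_def)

lemma CC_zero'[simp]: "(\<lambda>_. 0::real^'n) \<in> CC r"
  by (simp add: CC_def)

lemma CC_diff[intro]: "\<phi> \<in> CC r \<Longrightarrow> \<psi> \<in> CC r \<Longrightarrow> \<phi> - \<psi> \<in> CC r"
  unfolding CC_def by (auto intro!: continuous_on_diff)

lemma CC_bdd:
  assumes "\<phi> \<in> CC r"
  shows "bdd_above ((\<lambda>\<theta>. norm (\<phi> \<theta>)) ` {-r..0})"
proof -
  have "compact (\<phi> ` {-r..0})"
    using assms by (intro compact_continuous_image CC_cont) auto
  then have "bounded (\<phi> ` {-r..0})" by (rule compact_imp_bounded)
  then obtain B where "\<forall>x\<in>\<phi> ` {-r..0}. norm x \<le> B" by (auto simp: bounded_iff)
  then show ?thesis by (auto simp: bdd_above_def)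
qed

lemma cnorm_ge:
  assumes "\<phi> \<in> CC r" "\<theta> \<in> {-r..0}"
  shows "norm (\<phi> \<theta>) \<le> cnorm r \<phi>"
  unfolding cnorm_def by (rule cSUP_upper[OF assms(2) CC_bdd[OF assms(1)]])

lemma cnorm_le:
  assumes "r \<ge> 0" "\<And>\<theta>. \<theta> \<in> {-r..0} \<Longrightarrow> norm (\<phi> \<theta>) \<le> B"
  shows "cnorm r \<phi> \<le> B"
  unfolding cnorm_def
proof (rule cSUP_least)
  show "{-r..0} \<noteq> {}" using assms(1) by simp
qed (rule assms(2))

lemma cnorm_nonneg:
  assumes "r \<ge> 0" "\<phi> \<in> CC r"
  shows "0 \<le> cnorm r \<phi>"
proof -
  have "norm (\<phi> 0) \<le> cnorm r \<phi>" using assms by (intro cnorm_ge) auto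
  then show ?thesis using norm_ge_zero[of "\<phi> 0"] by linarith
qed

lemma cnorm_ge':
  assumes "r \<ge> 0" "\<phi> \<in> CC r"
  shows "norm (\<phi> \<theta>) \<le> cnorm r \<phi>"
proof (cases "\<theta> \<in> {-r..0}")
  case True then show ?thesis using cnorm_ge assms by blast
next
  case False
  then have "\<phi> \<theta> = 0" using assms CC_out by blast
  then show ?thesis using cnorm_nonneg[OF assms] by simp
qed

lemma cnorm_zero[simp]: "r \<ge> 0 \<Longrightarrow> cnorm r (\<lambda>_. 0::real^'n) = 0"
  unfolding cnorm_def by simp

lemma cnorm_triangle:
  assumes "r \<ge> 0" "\<phi> \<in> CC r" "\<psi> \<in> CC r" "\<eta> \<in> CC r"
  shows "cnorm r (\<phi> - \<eta>) \<le> cnorm r (\<phi> - \<psi>) + cnorm r (\<psi> - \<eta>)"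
proof (rule cnorm_le[OF assms(1)])
  fix \<theta> assume th: "\<theta> \<in> {-r..0}"
  have "norm ((\<phi> - \<eta>) \<theta>) = norm ((\<phi> \<theta> - \<psi> \<theta>) + (\<psi> \<theta> - \<eta> \<theta>))" by simp
  also have "\<dots> \<le> norm (\<phi> \<theta> - \<psi> \<theta>) + norm (\<psi> \<theta> - \<eta> \<theta>)" by (rule norm_triangle_ineq)
  also have "\<dots> \<le> cnorm r (\<phi> - \<psi>) + cnorm r (\<psi> - \<eta>)"
    using cnorm_ge[OF CC_diff[OF assms(2,3)] th] cnorm_ge[OF CC_diff[OF assms(3,4)] th] by simp
  finally show "norm ((\<phi> - \<eta>) \<theta>) \<le> cnorm r (\<phi> - \<psi>) + cnorm r (\<psi> - \<eta>)" .
qed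

lemma cnorm_minus_commute:
  assumes "r \<ge> 0" "\<phi> \<in> CC r" "\<psi> \<in> CC r"
  shows "cnorm r (\<phi> - \<psi>) = cnorm r (\<psi> - \<phi>)"
  unfolding cnorm_def by (simp add: norm_minus_commute)

lemma cnorm_zero_diff: "cnorm r (\<phi> - (\<lambda>_. 0)) = cnorm r \<phi>"
  by (simp add: fun_diff_def)

lemma cnorm_diff_ge:
  assumes "r \<ge> 0" "\<phi> \<in> CC r" "\<psi> \<in> CC r"
  shows "\<bar>cnorm r \<phi> - cnorm r \<psi>\<bar> \<le> cnorm r (\<phi> - \<psi>)"
proof -
  have 1: "cnorm r \<phi> \<le> cnorm r (\<phi> - \<psi>) + cnorm r \<psi>"
    using cnorm_triangle[OF assms(1,2,3) CC_zero'] by (simp add: cnorm_zero_diff)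
  have 2: "cnorm r \<psi> \<le> cnorm r (\<psi> - \<phi>) + cnorm r \<phi>"
    using cnorm_triangle[OF assms(1,3,2) CC_zero'] by (simp add: cnorm_zero_diff)
  show ?thesis using 1 2 cnorm_minus_commute[OF assms] by linarith
qed

lemma seg_CC:
  assumes "continuous_on {-r..} x" "t \<ge> 0"
  shows "seg r x t \<in> CC r"
proof -
  have "continuous_on {-r..0} (\<lambda>\<theta>. x (t + \<theta>))"
    by (rule continuous_on_compose2[OF assms(1)]) (use assms in \<open>auto intro!: continuous_intros\<close>)
  then have "continuous_on {-r..0} (seg r x t)"
    by (rule continuous_on_eq) (simp add: seg_def)
  then show ?thesis by (simp add: CC_def seg_def)
qed

section \<open>A monotonicity lemma via right Dini derivatives\<close>

lemma mono_dini:
  fixes h :: "real \<Rightarrow> real"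
  assumes ab: "a \<le> b"
    and lc: "\<And>t. t \<in> {a<..b} \<Longrightarrow> (h \<longlongrightarrow> h t) (at_left t)"
    and rd: "\<And>t \<epsilon>. t \<in> {a..<b} \<Longrightarrow> \<epsilon> > 0 \<Longrightarrow> \<exists>\<delta>>0. \<forall>s. t < s \<and> s < t + \<delta> \<longrightarrow> h s \<le> h t + \<epsilon> * (s - t)"
  shows "h b \<le> h a"
proof -
  have main: "h b \<le> h a + \<epsilon> * (b - a)" if \<epsilon>: "\<epsilon> > 0" for \<epsilon>
  proof -
    define S where "S = {s\<in>{a..b}. \<forall>u\<in>{a..s}. h u \<le> h a + \<epsilon> * (u - a)}"
    have aS: "a \<in> S" using ab by (auto simp: S_def)
    have bdd: "bdd_above S" unfolding bdd_above_def S_def by (rule exI[of _ b]) simp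
    define c where "c = Sup S"
    have ac: "a \<le> c" unfolding c_def using aS bdd by (rule cSup_upper)
    have cb: "c \<le> b" unfolding c_def
    proof (rule cSup_least)
      show "S \<noteq> {}" using aS by blast
    next
      fix x assume "x \<in> S" then show "x \<le> b" unfolding S_def by simp
    qed
    have below: "h u \<le> h a + \<epsilon> * (u - a)" if "a \<le> u" "u < c" for u
    proof -
      have "S \<noteq> {}" using aS by blast
      then obtain s where "s \<in> S" "u < s" using \<open>u < c\<close> unfolding c_def
        using less_cSupD by blast
      then have "\<forall>u\<in>{a..s}. h u \<le> h a + \<epsilon> * (u - a)" unfolding S_def by simp
      then show ?thesis using that \<open>u < s\<close> by simp
    qed
    have hc: "h c \<le> h a + \<epsilon> * (c - a)"
    proof (cases "c = a")
      case True then show ?thesis by simp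
    next
      case False
      then have "a < c" using ac by simp
      have lim: "(h \<longlongrightarrow> h c) (at_left c)" using \<open>a < c\<close> cb by (intro lc) simp
      have lim2: "((\<lambda>u. h a + \<epsilon> * (u - a)) \<longlongrightarrow> h a + \<epsilon> * (c - a)) (at_left c)"
        by (intro tendsto_intros tendsto_ident_at)
      have ev: "eventually (\<lambda>u. h u \<le> h a + \<epsilon> * (u - a)) (at_left c)"
      proof -
        have "eventually (\<lambda>u. a < u \<and> u < c) (at_left c)"
          using eventually_at_left_real[OF \<open>a < c\<close>] by (rule eventually_mono) auto
        then show ?thesis by eventually_elim (rule below, simp_all)
      qed
      show ?thesis by (rule tendsto_le[OF _ lim2 lim ev]) simp
    qed
    have cS: "c \<in> S"
    proof -
      have "h u \<le> h a + \<epsilon> * (u - a)" if "u \<in> {a..c}" for u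
      proof (cases "u = c")
        case True then show ?thesis using hc by simp
      next
        case False then show ?thesis using that below by auto
      qed
      then show ?thesis using ac cb unfolding S_def by simp
    qed
    have "c = b"
    proof (rule ccontr)
      assume "c \<noteq> b"
      then have "c < b" using cb by simp
      have "\<exists>\<delta>>0. \<forall>s. c < s \<and> s < c + \<delta> \<longrightarrow> h s \<le> h c + \<epsilon> * (s - c)"
        using rd[of c \<epsilon>] \<open>c < b\<close> ac \<epsilon> by simp
      then obtain \<delta> where \<delta>: "\<delta> > 0" "\<forall>s. c < s \<and> s < c + \<delta> \<longrightarrow> h s \<le> h c + \<epsilon> * (s - c)"
        by (elim exE conjE)
      define s' where "s' = min (c + \<delta>/2) b"
      have "s' \<in> S"
      proof -
        have "h u \<le> h a + \<epsilon> * (u - a)" if "a \<le> u" "u \<le> s'" for u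
        proof (cases "u \<le> c")
          case True
          have "\<forall>u\<in>{a..c}. h u \<le> h a + \<epsilon> * (u - a)" using cS unfolding S_def by simp
          then show ?thesis using True that by simp
        next
          case False
          have "u < c + \<delta>" using that \<open>\<delta> > 0\<close> unfolding s'_def by linarith
          then have "h u \<le> h c + \<epsilon> * (u - c)" using \<delta>(2) False by simp
          then show ?thesis using hc by (simp add: algebra_simps)
        qed
        moreover have "s' \<in> {a..b}" using ac \<open>c < b\<close> \<open>\<delta> > 0\<close> unfolding s'_def by simp
        ultimately show ?thesis unfolding S_def by simp
      qed
      then have "s' \<le> c" unfolding c_def using bdd by (rule cSup_upper)
      then show False using \<open>c < b\<close> \<open>\<delta> > 0\<close> unfolding s'_def by linarith
    qed
    then have "\<forall>u\<in>{a..b}. h u \<le> h a + \<epsilon> * (u - a)" using cS unfolding S_def by simp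
    then show ?thesis using ab by simp
  qed
  show ?thesis
  proof (rule field_le_epsilon)
    fix e :: real assume "e > 0"
    have "h b \<le> h a + (e / (b - a + 1)) * (b - a)"
      using main[of "e / (b - a + 1)"] \<open>e > 0\<close> ab by simp
    also have "(e / (b - a + 1)) * (b - a) \<le> e"
      using \<open>e > 0\<close> ab by (simp add: field_simps)
    finally show "h b \<le> h a + e" by simp
  qed
qed

locale sys =
  fixes r :: real and f :: "'q \<Rightarrow> (real \<Rightarrow> real^'n) \<Rightarrow> real^'n" and L :: real
  assumes r: "r \<ge> 0" and f0: "\<And>q. f q (\<lambda>_. 0) = 0"
    and ex: "\<And>q \<phi>. \<phi> \<in> CC r \<Longrightarrow> \<exists>x. is_sol r f q \<phi> x"
    and uniq: "\<And>q \<phi> x y t. \<phi> \<in> CC r \<Longrightarrow> is_sol r f q \<phi> x \<Longrightarrow> is_sol r f q \<phi> y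
                 \<Longrightarrow> t \<ge> -r \<Longrightarrow> x t = y t"
    and Lpos: "L > 0"
    and lip: "\<And>q \<psi>1 \<psi>2. \<psi>1 \<in> CC r \<Longrightarrow> \<psi>2 \<in> CC r \<Longrightarrow>
                 norm (f q \<psi>1 - f q \<psi>2) \<le> L * cnorm r (\<psi>1 - \<psi>2)"
begin

abbreviation X where "X q \<phi> \<equiv> SOME x. is_sol r f q \<phi> x"

lemma X_sol: "\<phi> \<in> CC r \<Longrightarrow> is_sol r f q \<phi> (X q \<phi>)"
  using ex by (rule someI_ex)

lemma sol_cont: "is_sol r f q \<phi> x \<Longrightarrow> continuous_on {-r..} x"
  by (simp add: is_sol_def)

lemma sol_init: "is_sol r f q \<phi> x \<Longrightarrow> \<theta> \<in> {-r..0} \<Longrightarrow> x \<theta> = \<phi> \<theta>"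
  by (simp add: is_sol_def)

lemma sol_deriv: "is_sol r f q \<phi> x \<Longrightarrow> t \<ge> 0 \<Longrightarrow>
    (x has_vector_derivative f q (seg r x t)) (at t within {0..})"
  by (simp add: is_sol_def)

lemma sol_isCont:
  assumes "is_sol r f q \<phi> x" "t > -r"
  shows "isCont x t"
proof -
  have "continuous_on {-r<..} x"
    using sol_cont[OF assms(1)] by (rule continuous_on_subset) auto
  then show ?thesis using assms(2)
    by (subst (asm) continuous_on_eq_continuous_at) auto
qed

lemma seg_in: "\<theta> \<in> {-r..0} \<Longrightarrow> seg r x t \<theta> = x (t + \<theta>)"
  by (simp add: seg_def)

lemma seg_out: "\<theta> \<notin> {-r..0} \<Longrightarrow> seg r x t \<theta> = 0"
  unfolding seg_def by (rule if_not_P)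

lemma Tsg_sol:
  assumes "\<phi> \<in> CC r" "is_sol r f q \<phi> x" "t \<ge> 0"
  shows "Tsg r f q t \<phi> = seg r x t"
proof
  fix \<theta>
  show "Tsg r f q t \<phi> \<theta> = seg r x t \<theta>"
  proof (cases "\<theta> \<in> {-r..0}")
    case True
    then have "t + \<theta> \<ge> -r" using assms(3) by auto
    then have "X q \<phi> (t + \<theta>) = x (t + \<theta>)"
      using uniq[OF assms(1) X_sol[OF assms(1)] assms(2)] by blast
    then show ?thesis using True by (simp add: Tsg_def seg_in)
  next
    case False then show ?thesis by (simp add: Tsg_def seg_out)
  qed
qed

lemma Tsg_CC: "\<phi> \<in> CC r \<Longrightarrow> t \<ge> 0 \<Longrightarrow> Tsg r f q t \<phi> \<in> CC r"
  unfolding Tsg_def by (rule seg_CC[OF sol_cont[OF X_sol]])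

lemma Tsg_0:
  assumes "\<phi> \<in> CC r"
  shows "Tsg r f q 0 \<phi> = \<phi>"
proof
  fix \<theta>
  show "Tsg r f q 0 \<phi> \<theta> = \<phi> \<theta>"
  proof (cases "\<theta> \<in> {-r..0}")
    case True
    then show ?thesis using sol_init[OF X_sol[OF assms] True] by (simp add: Tsg_def seg_in)
  next
    case False then show ?thesis using CC_out[OF assms False] by (simp add: Tsg_def seg_out[OF False])
  qed
qed

lemma Tsg_app:
  assumes "\<phi> \<in> CC r" "t \<ge> 0" "\<theta> \<in> {-r..0}"
  shows "Tsg r f q t \<phi> \<theta> = X q \<phi> (t + \<theta>)"
  using assms by (simp add: Tsg_def seg_def)

lemma zero_sol: "is_sol r f q (\<lambda>_. 0) (\<lambda>_. 0)"
proof -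
  have s0: "seg r (\<lambda>_. 0) t = (\<lambda>_. 0)" for t by (rule ext) (simp add: seg_def)
  show ?thesis unfolding is_sol_def
    by (simp add: s0 f0 continuous_on_const)
qed

lemma Tsg_zero: "t \<ge> 0 \<Longrightarrow> Tsg r f q t (\<lambda>_. 0) = (\<lambda>_. 0)"
proof -
  assume "t \<ge> 0"
  then have "Tsg r f q t (\<lambda>_. 0) = seg r (\<lambda>_. 0) t" by (rule Tsg_sol[OF CC_zero' zero_sol])
  also have "\<dots> = (\<lambda>_. 0)" by (rule ext) (simp add: seg_def)
  finally show ?thesis .
qed

lemma semigroup:
  assumes \<phi>: "\<phi> \<in> CC r" and s: "s \<ge> 0" and t: "t \<ge> 0"
  shows "Tsg r f q t (Tsg r f q s \<phi>) = Tsg r f q (s + t) \<phi>"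
proof -
  define x where "x = X q \<phi>"
  have xs: "is_sol r f q \<phi> x" unfolding x_def by (rule X_sol[OF \<phi>])
  define y where "y = (\<lambda>\<tau>. x (\<tau> + s))"
  have segy: "seg r y \<tau> = seg r x (\<tau> + s)" for \<tau>
    by (rule ext) (simp add: seg_def y_def algebra_simps)
  have ys: "is_sol r f q (Tsg r f q s \<phi>) y"
    unfolding is_sol_def
  proof (intro conjI ballI allI impI)
    fix \<theta> :: real assume "\<theta> \<in> {-r..0}"
    then show "y \<theta> = Tsg r f q s \<phi> \<theta>"
      by (simp add: Tsg_def seg_def y_def x_def algebra_simps)
  next
    show "continuous_on {-r..} y"
      unfolding y_def
      by (rule continuous_on_compose2[OF sol_cont[OF xs]]) (use s in \<open>auto intro!: continuous_intros\<close>)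
  next
    fix \<tau> :: real assume "0 \<le> \<tau>"
    have d1: "((\<lambda>\<tau>. \<tau> + s) has_vector_derivative 1) (at \<tau> within {0..})"
      by (auto intro!: derivative_eq_intros)
    have d2: "(x has_vector_derivative f q (seg r x (\<tau> + s))) (at (\<tau> + s) within {0..})"
      using sol_deriv[OF xs] \<open>0 \<le> \<tau>\<close> s by simp
    have d3: "(x has_vector_derivative f q (seg r x (\<tau> + s))) (at (\<tau> + s) within (\<lambda>\<tau>. \<tau> + s) ` {0..})"
      by (rule has_vector_derivative_within_subset[OF d2]) (use s in auto)
    have "((x \<circ> (\<lambda>\<tau>. \<tau> + s)) has_vector_derivative (1::real) *\<^sub>R f q (seg r x (\<tau> + s))) (at \<tau> within {0..})"
      by (rule vector_diff_chain_within[OF d1 d3])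
    then have "(y has_vector_derivative f q (seg r x (\<tau> + s))) (at \<tau> within {0..})"
      by (simp add: y_def o_def)
    then show "(y has_vector_derivative f q (seg r y \<tau>)) (at \<tau> within {0..})"
      by (simp only: segy)
  qed
  have "Tsg r f q t (Tsg r f q s \<phi>) = seg r y t"
    by (rule Tsg_sol[OF Tsg_CC[OF \<phi> s] ys t])
  also have "\<dots> = seg r x (s + t)" by (simp add: segy add.commute)
  also have "\<dots> = Tsg r f q (s + t) \<phi>" by (simp add: x_def Tsg_def)
  finally show ?thesis .
qed

lemma deriv_right_bound:
  fixes x :: "real \<Rightarrow> 'a::real_normed_vector"
  assumes "(x has_vector_derivative d) (at t within {0..})" "t \<ge> 0" "\<epsilon> > 0"
  shows "\<exists>\<delta>>0. \<forall>s. t < s \<and> s < t + \<delta> \<longrightarrow> norm (x s - x t - (s - t) *\<^sub>R d) \<le> \<epsilon> * (s - t)"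
proof -
  have "((\<lambda>y. (1 / norm (y - t)) *\<^sub>R (x y - (x t + (y - t) *\<^sub>R d))) \<longlongrightarrow> 0) (at t within {0..})"
    using assms(1) unfolding has_vector_derivative_def has_derivative_within by blast
  then have "eventually (\<lambda>y. dist ((1 / norm (y - t)) *\<^sub>R (x y - (x t + (y - t) *\<^sub>R d))) 0 < \<epsilon>) (at t within {0..})"
    by (rule tendstoD[OF _ assms(3)])
  then obtain \<delta> where \<delta>: "\<delta> > 0" and
    P: "\<And>y. y \<in> {0..} \<Longrightarrow> 0 < dist y t \<Longrightarrow> dist y t < \<delta> \<Longrightarrow>
          dist ((1 / norm (y - t)) *\<^sub>R (x y - (x t + (y - t) *\<^sub>R d))) 0 < \<epsilon>"
    using eventually_at[THEN iffD1, OF \<open>eventually _ _\<close>] by (elim exE conjE) (simp add: that)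
  have "norm (x s - x t - (s - t) *\<^sub>R d) \<le> \<epsilon> * (s - t)" if "t < s" "s < t + \<delta>" for s
  proof -
    have "dist ((1 / norm (s - t)) *\<^sub>R (x s - (x t + (s - t) *\<^sub>R d))) 0 < \<epsilon>"
      using that assms(2) by (intro P) (auto simp: dist_real_def)
    moreover have "x s - (x t + (s - t) *\<^sub>R d) = x s - x t - (s - t) *\<^sub>R d" by simp
    ultimately have "norm (x s - x t - (s - t) *\<^sub>R d) / (s - t) < \<epsilon>"
      using that by (simp add: dist_norm)
    then show ?thesis using that by (simp add: field_simps)
  qed
  then show ?thesis using \<delta> by blast
qed

lemma gronwall:
  assumes \<phi>: "\<phi> \<in> CC r" and \<psi>: "\<psi> \<in> CC r" and t: "t \<ge> 0"
  shows "cnorm r (Tsg r f q t \<phi> - Tsg r f q t \<psi>) \<le> exp (L * t) * cnorm r (\<phi> - \<psi>)"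
proof -
  define x where "x = X q \<phi>"
  define y where "y = X q \<psi>"
  have xs: "is_sol r f q \<phi> x" unfolding x_def by (rule X_sol[OF \<phi>])
  have ys: "is_sol r f q \<psi> y" unfolding y_def by (rule X_sol[OF \<psi>])
  define \<delta> where "\<delta> = cnorm r (\<phi> - \<psi>)"
  have \<delta>0: "\<delta> \<ge> 0" unfolding \<delta>_def by (rule cnorm_nonneg[OF r CC_diff[OF \<phi> \<psi>]])
  have init: "norm (x s - y s) \<le> \<delta>" if "s \<in> {-r..0}" for s
  proof -
    have "norm (x s - y s) = norm ((\<phi> - \<psi>) s)"
      using sol_init[OF xs that] sol_init[OF ys that] by simp
    also have "\<dots> \<le> \<delta>" unfolding \<delta>_def by (rule cnorm_ge[OF CC_diff[OF \<phi> \<psi>] that])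
    finally show ?thesis .
  qed
  have K: "norm (x s - y s) < \<delta>' * exp (L * s)" if \<delta>': "\<delta>' > \<delta>" and s: "s \<ge> 0" for \<delta>' s
  proof (rule ccontr)
    assume "\<not> norm (x s - y s) < \<delta>' * exp (L * s)"
    then have ge: "\<delta>' * exp (L * s) \<le> norm (x s - y s)" by simp
    define g where "g = (\<lambda>u. \<delta>' * exp (L * u))"
    define h where "h = (\<lambda>u. norm (x u - y u) - g u)"
    define S where "S = {0..s} \<inter> h -` {0..}"
    have sS: "s \<in> S" using s ge by (simp add: S_def h_def g_def)
    have contxy: "continuous_on {0..s} (\<lambda>u. x u - y u)"
      using sol_cont[OF xs] sol_cont[OF ys] r
      by (intro continuous_on_diff) (auto elim!: continuous_on_subset)
    have conth: "continuous_on {0..s} h"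
      unfolding h_def g_def by (intro continuous_intros contxy)
    have clS: "closed S" unfolding S_def
      by (rule continuous_closed_preimage[OF conth]) auto
    have bS: "bdd_below S" by (auto simp: S_def bdd_below_def)
    define u0 where "u0 = Inf S"
    have u0S: "u0 \<in> S" unfolding u0_def
      using sS bS clS closed_contains_Inf by blast
    then have u0s: "0 \<le> u0" "u0 \<le> s" and hu0: "h u0 \<ge> 0" by (auto simp: S_def)
    have below: "norm (x u - y u) < g u" if "0 \<le> u" "u < u0" for u
    proof (rule ccontr)
      assume "\<not> norm (x u - y u) < g u"
      then have "u \<in> S" using that u0s by (simp add: S_def h_def)
      then have "u0 \<le> u" unfolding u0_def using bS by (rule cInf_lower)
      then show False using that by simp
    qed
    have g_mono: "g a \<le> g b" if "a \<le> b" for a b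
      unfolding g_def using that \<delta>' \<delta>0 Lpos by (intro mult_left_mono) auto
    have g_ge: "\<delta>' \<le> g u" if "u \<ge> 0" for u
      unfolding g_def using that \<delta>' \<delta>0 Lpos by simp
    have segb: "cnorm r (seg r x u - seg r y u) \<le> g u" if "0 \<le> u" "u < u0" for u
    proof (rule cnorm_le[OF r])
      fix \<theta> assume th: "\<theta> \<in> {-r..0}"
      have eq: "(seg r x u - seg r y u) \<theta> = x (u + \<theta>) - y (u + \<theta>)"
        using th by (simp add: seg_in)
      show "norm ((seg r x u - seg r y u) \<theta>) \<le> g u"
      proof (cases "u + \<theta> < 0")
        case True
        then have "u + \<theta> \<in> {-r..0}" using th that by auto
        then have "norm (x (u + \<theta>) - y (u + \<theta>)) \<le> \<delta>" by (rule init)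
        then show ?thesis using eq g_ge[OF that(1)] \<delta>' by simp
      next
        case False
        then have "norm (x (u + \<theta>) - y (u + \<theta>)) < g (u + \<theta>)"
          using that th by (intro below) auto
        moreover have "g (u + \<theta>) \<le> g u" using th by (intro g_mono) auto
        ultimately show ?thesis using eq by simp
      qed
    qed
    have "h u0 \<le> h 0"
    proof (rule mono_dini[OF u0s(1)])
      fix u assume u: "u \<in> {0<..u0}"
      then have "u > -r" using r by auto
      have "isCont h u" unfolding h_def g_def
        by (intro continuous_intros sol_isCont[OF xs \<open>u > -r\<close>] sol_isCont[OF ys \<open>u > -r\<close>])
      then have "(h \<longlongrightarrow> h u) (at u)" by (simp add: isCont_def)
      then show "(h \<longlongrightarrow> h u) (at_left u)" by (rule tendsto_mono[OF at_le[OF subset_UNIV]])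
    next
      fix u \<epsilon> :: real assume u: "u \<in> {0..<u0}" and \<epsilon>: "\<epsilon> > 0"
      then have u0': "0 \<le> u" "u < u0" by auto
      define dv where "dv = f q (seg r x u) - f q (seg r y u)"
      have dx: "((\<lambda>s. x s - y s) has_vector_derivative dv) (at u within {0..})"
        unfolding dv_def
        by (intro has_vector_derivative_diff sol_deriv[OF xs u0'(1)] sol_deriv[OF ys u0'(1)])
      obtain \<delta>1 where \<delta>1: "\<delta>1 > 0"
        and B: "\<And>s. u < s \<Longrightarrow> s < u + \<delta>1 \<Longrightarrow> norm (x s - y s - (x u - y u) - (s - u) *\<^sub>R dv) \<le> \<epsilon> * (s - u)"
        using deriv_right_bound[OF dx u0'(1) \<epsilon>] by blast
      have ndv: "norm dv \<le> L * g u"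
      proof -
        have "norm dv \<le> L * cnorm r (seg r x u - seg r y u)"
          unfolding dv_def
          by (rule lip[OF seg_CC[OF sol_cont[OF xs] u0'(1)] seg_CC[OF sol_cont[OF ys] u0'(1)]])
        also have "\<dots> \<le> L * g u" using segb[OF u0'] Lpos by simp
        finally show ?thesis .
      qed
      have "h s \<le> h u + \<epsilon> * (s - u)" if "u < s" "s < u + \<delta>1" for s
      proof -
        have n1: "norm (x s - y s) \<le> norm (x u - y u) + norm (x s - y s - (x u - y u) - (s - u) *\<^sub>R dv) + norm ((s - u) *\<^sub>R dv)"
        proof -
          let ?A = "x u - y u" and ?B = "x s - y s - (x u - y u) - (s - u) *\<^sub>R dv" and ?C = "(s - u) *\<^sub>R dv"
          have "x s - y s = ?A + (?B + ?C)" by simp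
          then have "norm (x s - y s) \<le> norm ?A + norm (?B + ?C)" by (metis norm_triangle_ineq)
          also have "norm (?B + ?C) \<le> norm ?B + norm ?C" by (rule norm_triangle_ineq)
          finally show ?thesis by simp
        qed
        have n2: "norm ((s - u) *\<^sub>R dv) \<le> (s - u) * (L * g u)"
          using that ndv by simp
        have "g s = g u * exp (L * (s - u))"
          unfolding g_def by (simp add: algebra_simps exp_add[symmetric])
        moreover have "exp (L * (s - u)) \<ge> 1 + L * (s - u)" by (rule exp_ge_add_one_self)
        moreover have "g u \<ge> 0" using g_ge[OF u0'(1)] \<delta>' \<delta>0 by simp
        ultimately have n3: "g s \<ge> g u + (s - u) * (L * g u)"
        proof -
          assume a1: "g s = g u * exp (L * (s - u))" and a2: "exp (L * (s - u)) \<ge> 1 + L * (s - u)" and a3: "g u \<ge> 0"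
          have "g u * (1 + L * (s - u)) \<le> g u * exp (L * (s - u))" by (rule mult_left_mono[OF a2 a3])
          then show ?thesis using a1 by (simp add: algebra_simps)
        qed
        show ?thesis using n1 n2 n3 B[OF that] unfolding h_def by linarith
      qed
      then show "\<exists>\<delta>>0. \<forall>s. u < s \<and> s < u + \<delta> \<longrightarrow> h s \<le> h u + \<epsilon> * (s - u)"
        using \<delta>1 by blast
    qed
    moreover have "h 0 < 0"
    proof -
      have "norm (x 0 - y 0) \<le> \<delta>" using r by (intro init) auto
      then show ?thesis unfolding h_def g_def using \<delta>' by simp
    qed
    ultimately show False using hu0 by simp
  qed
  show ?thesis
  proof (rule cnorm_le[OF r])
    fix \<theta> assume th: "\<theta> \<in> {-r..0}"
    have eq: "(Tsg r f q t \<phi> - Tsg r f q t \<psi>) \<theta> = x (t + \<theta>) - y (t + \<theta>)"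
      using Tsg_app[OF \<phi> t th] Tsg_app[OF \<psi> t th] by (simp add: x_def y_def)
    have e1: "exp (L * t) \<ge> 1" using t Lpos by simp
    show "norm ((Tsg r f q t \<phi> - Tsg r f q t \<psi>) \<theta>) \<le> exp (L * t) * cnorm r (\<phi> - \<psi>)"
    proof (cases "t + \<theta> \<le> 0")
      case True
      then have "norm (x (t + \<theta>) - y (t + \<theta>)) \<le> \<delta>" using th t by (intro init) auto
      also have "\<dots> \<le> exp (L * t) * \<delta>" using e1 \<delta>0 by (simp add: mult_le_cancel_right1)
      finally show ?thesis using eq by (simp add: \<delta>_def)
    next
      case False
      have "norm (x (t + \<theta>) - y (t + \<theta>)) \<le> exp (L * t) * \<delta> + e" if "e > 0" for e
      proof -
        have "norm (x (t + \<theta>) - y (t + \<theta>)) < (\<delta> + e / exp (L * t)) * exp (L * (t + \<theta>))"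
          using False that by (intro K) auto
        also have "\<dots> \<le> (\<delta> + e / exp (L * t)) * exp (L * t)"
          using th Lpos \<delta>0 that by (intro mult_left_mono) (auto simp: mult_le_cancel_left)
        also have "\<dots> = exp (L * t) * \<delta> + e" by (simp add: field_simps)
        finally show ?thesis by simp
      qed
      then have "norm (x (t + \<theta>) - y (t + \<theta>)) \<le> exp (L * t) * \<delta>" by (rule field_le_epsilon)
      then show ?thesis using eq by (simp add: \<delta>_def)
    qed
  qed
qed

lemma Tsg_bound:
  assumes "\<phi> \<in> CC r" "t \<ge> 0"
  shows "cnorm r (Tsg r f q t \<phi>) \<le> exp (L * t) * cnorm r \<phi>"
  using gronwall[OF assms(1) CC_zero' assms(2), of q] Tsg_zero[OF assms(2), of q]
  by (simp add: cnorm_zero_diff)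

lemma traj_cont:
  assumes \<phi>: "\<phi> \<in> CC r" and t: "t \<ge> 0" and \<epsilon>: "\<epsilon> > 0"
  shows "\<exists>\<delta>>0. \<forall>s\<ge>0. \<bar>s - t\<bar> < \<delta> \<longrightarrow> cnorm r (Tsg r f q s \<phi> - Tsg r f q t \<phi>) < \<epsilon>"
proof -
  define x where "x = X q \<phi>"
  have xs: "is_sol r f q \<phi> x" unfolding x_def by (rule X_sol[OF \<phi>])
  have "continuous_on {-r..t+1} x" using sol_cont[OF xs] by (rule continuous_on_subset) auto
  then have "uniformly_continuous_on {-r..t+1} x"
    by (intro compact_uniformly_continuous) auto
  then have "\<exists>d>0. \<forall>a\<in>{-r..t+1}. \<forall>b\<in>{-r..t+1}. dist b a < d \<longrightarrow> dist (x b) (x a) < \<epsilon> / 2"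
    using \<epsilon> unfolding uniformly_continuous_on_def by (elim allE[of _ "\<epsilon>/2"]) simp
  then obtain d where d: "d > 0" and
    U: "\<And>a b. a \<in> {-r..t+1} \<Longrightarrow> b \<in> {-r..t+1} \<Longrightarrow> dist b a < d \<Longrightarrow> dist (x b) (x a) < \<epsilon> / 2"
    by (elim exE conjE) (simp add: that)
  have "cnorm r (Tsg r f q s \<phi> - Tsg r f q t \<phi>) < \<epsilon>" if "s \<ge> 0" "\<bar>s - t\<bar> < min d 1" for s
  proof -
    have "cnorm r (Tsg r f q s \<phi> - Tsg r f q t \<phi>) \<le> \<epsilon> / 2"
    proof (rule cnorm_le[OF r])
      fix \<theta> assume th: "\<theta> \<in> {-r..0}"
      have eq: "(Tsg r f q s \<phi> - Tsg r f q t \<phi>) \<theta> = x (s + \<theta>) - x (t + \<theta>)"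
        using Tsg_app[OF \<phi> \<open>s \<ge> 0\<close> th] Tsg_app[OF \<phi> t th] by (simp add: x_def)
      have "dist (x (s + \<theta>)) (x (t + \<theta>)) < \<epsilon> / 2"
        using th that t by (intro U) (auto simp: dist_real_def)
      then show "norm ((Tsg r f q s \<phi> - Tsg r f q t \<phi>) \<theta>) \<le> \<epsilon> / 2"
        using eq by (simp add: dist_norm)
    qed
    then show ?thesis using \<epsilon> by simp
  qed
  then show ?thesis using d by (intro exI[of _ "min d 1"]) auto
qed

end

context sys
begin

fun run :: "('q \<times> real) list \<Rightarrow> (real \<Rightarrow> real^'n) \<Rightarrow> (real \<Rightarrow> real^'n)" where
  "run [] \<psi> = \<psi>"
| "run ((q, d) # w) \<psi> = run w (Tsg r f q d \<psi>)"

definition dur :: "('q \<times> real) list \<Rightarrow> real" where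
  "dur w = sum_list (map snd w)"

definition okw :: "('q \<times> real) list \<Rightarrow> bool" where
  "okw w \<longleftrightarrow> (\<forall>p\<in>set w. snd p \<ge> 0)"

lemma dur_Nil[simp]: "dur [] = 0" by (simp add: dur_def)
lemma dur_Cons[simp]: "dur ((q, d) # w) = d + dur w" by (simp add: dur_def)
lemma dur_append[simp]: "dur (w1 @ w2) = dur w1 + dur w2" by (simp add: dur_def)
lemma okw_Nil[simp]: "okw []" by (simp add: okw_def)
lemma okw_Cons[simp]: "okw ((q, d) # w) \<longleftrightarrow> d \<ge> 0 \<and> okw w" by (auto simp: okw_def)
lemma okw_append[simp]: "okw (w1 @ w2) \<longleftrightarrow> okw w1 \<and> okw w2" by (auto simp: okw_def)

lemma dur_nonneg: "okw w \<Longrightarrow> dur w \<ge> 0"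
  by (induction w) auto

lemma run_append: "run (w1 @ w2) \<psi> = run w2 (run w1 \<psi>)"
  by (induction w1 arbitrary: \<psi>) auto

lemma run_CC: "okw w \<Longrightarrow> \<psi> \<in> CC r \<Longrightarrow> run w \<psi> \<in> CC r"
  by (induction w arbitrary: \<psi>) (auto simp: Tsg_CC)

lemma run_lip:
  "okw w \<Longrightarrow> \<phi> \<in> CC r \<Longrightarrow> \<psi> \<in> CC r \<Longrightarrow>
     cnorm r (run w \<phi> - run w \<psi>) \<le> exp (L * dur w) * cnorm r (\<phi> - \<psi>)"
proof (induction w arbitrary: \<phi> \<psi>)
  case Nil then show ?case by simp
next
  case (Cons p w)
  obtain q d where p: "p = (q, d)" by (cases p)
  have d: "d \<ge> 0" and w: "okw w" using Cons.prems p by auto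
  have "cnorm r (run (p # w) \<phi> - run (p # w) \<psi>) = cnorm r (run w (Tsg r f q d \<phi>) - run w (Tsg r f q d \<psi>))"
    by (simp add: p)
  also have "\<dots> \<le> exp (L * dur w) * cnorm r (Tsg r f q d \<phi> - Tsg r f q d \<psi>)"
    by (rule Cons.IH[OF w Tsg_CC[OF Cons.prems(2) d] Tsg_CC[OF Cons.prems(3) d]])
  also have "\<dots> \<le> exp (L * dur w) * (exp (L * d) * cnorm r (\<phi> - \<psi>))"
    by (rule mult_left_mono[OF gronwall[OF Cons.prems(2,3) d]]) simp
  also have "\<dots> = exp (L * dur (p # w)) * cnorm r (\<phi> - \<psi>)"
    by (simp add: p algebra_simps exp_add[symmetric])
  finally show ?case .
qed

lemma run_zero: "okw w \<Longrightarrow> run w (\<lambda>_. 0) = (\<lambda>_. 0)"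
  by (induction w) (auto simp: Tsg_zero)

lemma run_bound:
  "okw w \<Longrightarrow> \<phi> \<in> CC r \<Longrightarrow> cnorm r (run w \<phi>) \<le> exp (L * dur w) * cnorm r \<phi>"
  using run_lip[of w \<phi> "\<lambda>_. 0"] run_zero[of w] by (simp add: cnorm_zero_diff)

fun pre :: "real \<Rightarrow> ('q \<times> real) list \<Rightarrow> ('q \<times> real) list" where
  "pre t [] = []"
| "pre t ((q, d) # w) = (if t \<le> d then [(q, t)] else (q, d) # pre (t - d) w)"

fun suf :: "real \<Rightarrow> ('q \<times> real) list \<Rightarrow> ('q \<times> real) list" where
  "suf t [] = []"
| "suf t ((q, d) # w) = (if t \<le> d then (q, d - t) # w else suf (t - d) w)"

lemma okw_pre: "okw w \<Longrightarrow> t \<ge> 0 \<Longrightarrow> okw (pre t w)"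
  by (induction t w rule: pre.induct) auto

lemma okw_suf: "okw w \<Longrightarrow> t \<ge> 0 \<Longrightarrow> okw (suf t w)"
  by (induction t w rule: suf.induct) auto

lemma dur_pre: "okw w \<Longrightarrow> 0 \<le> t \<Longrightarrow> t \<le> dur w \<Longrightarrow> dur (pre t w) = t"
  by (induction t w rule: pre.induct) auto

lemma dur_suf: "okw w \<Longrightarrow> 0 \<le> t \<Longrightarrow> t \<le> dur w \<Longrightarrow> dur (suf t w) = dur w - t"
  by (induction t w rule: suf.induct) auto

lemma run_split:
  "okw w \<Longrightarrow> 0 \<le> t \<Longrightarrow> \<psi> \<in> CC r \<Longrightarrow> run w \<psi> = run (suf t w) (run (pre t w) \<psi>)"
proof (induction t w arbitrary: \<psi> rule: pre.induct)
  case (1 t) then show ?case by simp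
next
  case (2 t q d w)
  show ?case
  proof (cases "t \<le> d")
    case True
    have "Tsg r f q (d - t) (Tsg r f q t \<psi>) = Tsg r f q d \<psi>"
      using semigroup[OF 2(4), of t "d - t" q] 2(3) True by simp
    then show ?thesis using True by simp
  next
    case False
    then have "run w (Tsg r f q d \<psi>) = run (suf (t - d) w) (run (pre (t - d) w) (Tsg r f q d \<psi>))"
      using 2 by (intro 2(1)) (auto intro: Tsg_CC)
    then show ?thesis using False by simp
  qed
qed

lemma run_pre0: "okw w \<Longrightarrow> \<psi> \<in> CC r \<Longrightarrow> run (pre 0 w) \<psi> = \<psi>"
  by (cases w) (auto simp: Tsg_0)

end

lemma idx_unique:
  fixes ts :: "nat \<Rightarrow> real"
  assumes "strict_mono ts" "t \<in> {ts k..<ts (Suc k)}" "t \<in> {ts j..<ts (Suc j)}"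
  shows "k = j"
proof (rule ccontr)
  assume "k \<noteq> j"
  then consider "Suc k \<le> j" | "Suc j \<le> k" by linarith
  then show False
  proof cases
    case 1
    then have "ts (Suc k) \<le> ts j" by (rule strict_mono_leD[OF assms(1)])
    then show False using assms(2,3) by simp
  next
    case 2
    then have "ts (Suc j) \<le> ts k" by (rule strict_mono_leD[OF assms(1)])
    then show False using assms(2,3) by simp
  qed
qed

lemma PC_part_D:
  assumes "PC_part \<sigma> ts"
  shows "ts 0 = 0" "strict_mono ts" "filterlim ts at_top sequentially"
    "\<And>k t. t \<in> {ts k..<ts (Suc k)} \<Longrightarrow> \<sigma> t = \<sigma> (ts k)"
  using assms unfolding PC_part_def by blast+

lemma ts_nonneg:
  assumes "PC_part \<sigma> ts" shows "ts k \<ge> 0"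
  using strict_mono_leD[OF PC_part_D(2)[OF assms], of 0 k] PC_part_D(1)[OF assms] by simp

lemma ts_beyond:
  assumes "PC_part \<sigma> ts" shows "\<exists>j. t < ts j"
proof -
  have "eventually (\<lambda>j. t < ts j) sequentially"
    using PC_part_D(3)[OF assms] unfolding filterlim_at_top_dense by blast
  then show ?thesis by (meson eventually_sequentially order_refl)
qed

lemma idx_ex:
  assumes "PC_part \<sigma> ts" "t \<ge> 0"
  shows "\<exists>k. t \<in> {ts k..<ts (Suc k)}"
proof -
  obtain j where j: "t < ts j" using ts_beyond[OF assms(1)] by blast
  define j0 where "j0 = (LEAST j. t < ts j)"
  have j0: "t < ts j0" unfolding j0_def using j by (rule LeastI)
  have "j0 \<noteq> 0"
  proof
    assume "j0 = 0"
    then show False using j0 assms(2) PC_part_D(1)[OF assms(1)] by simp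
  qed
  then obtain k where k: "j0 = Suc k" by (cases j0) auto
  have "k < j0" using k by simp
  then have "\<not> t < ts k" unfolding j0_def by (rule not_less_Least)
  then have "t \<in> {ts k..<ts (Suc k)}" using j0 k by simp
  then show ?thesis by blast
qed

context sys
begin

definition Fl :: "(real \<Rightarrow> 'q) \<Rightarrow> (nat \<Rightarrow> real) \<Rightarrow> (real \<Rightarrow> real^'n) \<Rightarrow> real \<Rightarrow> (real \<Rightarrow> real^'n)" where
  "Fl \<sigma> ts \<psi> t = (let k = SOME k. t \<in> {ts k..<ts (Suc k)}
     in Tsg r f (\<sigma> (ts k)) (t - ts k) (flow_at r f \<sigma> ts k \<psi>))"

lemma flow_Fl: "flow r f t \<psi> \<sigma> = Fl \<sigma> (SOME ts. PC_part \<sigma> ts) \<psi> t"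
  by (simp add: flow_def Fl_def Let_def)

lemma Fl_at:
  assumes "strict_mono ts" "t \<in> {ts k..<ts (Suc k)}"
  shows "Fl \<sigma> ts \<psi> t = Tsg r f (\<sigma> (ts k)) (t - ts k) (flow_at r f \<sigma> ts k \<psi>)"
proof -
  have "(SOME k. t \<in> {ts k..<ts (Suc k)}) = k"
  proof (rule some_equality)
    show "t \<in> {ts k..<ts (Suc k)}" by (rule assms(2))
  next
    fix j assume "t \<in> {ts j..<ts (Suc j)}"
    then show "j = k" using idx_unique[OF assms(1) _ assms(2)] by blast
  qed
  then show ?thesis by (simp add: Fl_def Let_def)
qed

lemma flow_at_CC:
  assumes "PC_part \<sigma> ts" "\<psi> \<in> CC r"
  shows "flow_at r f \<sigma> ts k \<psi> \<in> CC r"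
proof (induction k)
  case 0 then show ?case using assms by simp
next
  case (Suc k)
  have "ts k \<le> ts (Suc k)" using strict_mono_leD[OF PC_part_D(2)[OF assms(1)]] by simp
  then show ?case using Suc by (simp add: Tsg_CC)
qed

lemma E1:
  assumes "PC_part \<sigma> ts" "\<psi> \<in> CC r" "t \<in> {ts j..ts (Suc j)}"
  shows "Fl \<sigma> ts \<psi> t = Tsg r f (\<sigma> (ts j)) (t - ts j) (flow_at r f \<sigma> ts j \<psi>)"
proof (cases "t < ts (Suc j)")
  case True
  then show ?thesis using assms by (intro Fl_at PC_part_D(2)[OF assms(1)]) auto
next
  case False
  then have t: "t = ts (Suc j)" using assms(3) by auto
  have sm: "strict_mono ts" by (rule PC_part_D(2)[OF assms(1)])
  have tint: "t \<in> {ts (Suc j)..<ts (Suc (Suc j))}" using t strict_monoD[OF sm, of "Suc j" "Suc (Suc j)"] by simp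
  have "Fl \<sigma> ts \<psi> t = Tsg r f (\<sigma> (ts (Suc j))) (t - ts (Suc j)) (flow_at r f \<sigma> ts (Suc j) \<psi>)"
    by (rule Fl_at[OF sm tint])
  also have "\<dots> = flow_at r f \<sigma> ts (Suc j) \<psi>"
    unfolding t diff_self by (rule Tsg_0[OF flow_at_CC[OF assms(1,2)]])
  also have "\<dots> = Tsg r f (\<sigma> (ts j)) (t - ts j) (flow_at r f \<sigma> ts j \<psi>)"
    using t by simp
  finally show ?thesis .
qed

lemma Fl_node:
  assumes "PC_part \<sigma> ts" "\<psi> \<in> CC r"
  shows "Fl \<sigma> ts \<psi> (ts j) = flow_at r f \<sigma> ts j \<psi>"
proof -
  have sm: "strict_mono ts" by (rule PC_part_D(2)[OF assms(1)])
  have tint: "ts j \<in> {ts j..<ts (Suc j)}" using strict_monoD[OF sm, of j "Suc j"] by simp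
  have "Fl \<sigma> ts \<psi> (ts j) = Tsg r f (\<sigma> (ts j)) (ts j - ts j) (flow_at r f \<sigma> ts j \<psi>)"
    by (rule Fl_at[OF sm tint])
  also have "\<dots> = flow_at r f \<sigma> ts j \<psi>"
    unfolding diff_self by (rule Tsg_0[OF flow_at_CC[OF assms(1,2)]])
  finally show ?thesis .
qed

lemma Fl_CC:
  assumes "PC_part \<sigma> ts" "\<psi> \<in> CC r" "t \<ge> 0"
  shows "Fl \<sigma> ts \<psi> t \<in> CC r"
proof -
  obtain k where k: "t \<in> {ts k..<ts (Suc k)}" using idx_ex[OF assms(1,3)] by blast
  show ?thesis using k Fl_at[OF PC_part_D(2)[OF assms(1)] k]
    by (auto intro!: Tsg_CC flow_at_CC[OF assms(1,2)])
qed

lemma E2: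
  assumes P: "PC_part \<sigma> ts" and \<psi>: "\<psi> \<in> CC r" and ab: "0 \<le> a" "a \<le> b"
    and const: "\<And>s. s \<in> {a..<b} \<Longrightarrow> \<sigma> s = q"
  shows "Fl \<sigma> ts \<psi> b = Tsg r f q (b - a) (Fl \<sigma> ts \<psi> a)"
proof -
  have sm: "strict_mono ts" by (rule PC_part_D(2)[OF P])
  obtain k where k: "a \<in> {ts k..<ts (Suc k)}" using idx_ex[OF P ab(1)] by blast
  have FaCC: "Fl \<sigma> ts \<psi> a \<in> CC r" by (rule Fl_CC[OF P \<psi> ab(1)])
  have main: "\<forall>b. a \<le> b \<longrightarrow> b \<le> ts (k + m + 1) \<longrightarrow> (\<forall>s\<in>{a..<b}. \<sigma> s = q) \<longrightarrow>
      Fl \<sigma> ts \<psi> b = Tsg r f q (b - a) (Fl \<sigma> ts \<psi> a)" for m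
  proof (induction m)
    case 0
    show ?case
    proof (intro allI impI)
      fix b assume b: "a \<le> b" "b \<le> ts (k + 0 + 1)" and c: "\<forall>s\<in>{a..<b}. \<sigma> s = q"
      show "Fl \<sigma> ts \<psi> b = Tsg r f q (b - a) (Fl \<sigma> ts \<psi> a)"
      proof (cases "a = b")
        case True then show ?thesis using Tsg_0[OF FaCC] by simp
      next
        case False
        then have "a < b" using b by simp
        then have "a \<in> {a..<b}" by simp
        then have "\<sigma> a = q" using c by blast
        moreover have "\<sigma> a = \<sigma> (ts k)" by (rule PC_part_D(4)[OF P k])
        ultimately have q: "q = \<sigma> (ts k)" by simp
        have "Fl \<sigma> ts \<psi> b = Tsg r f (\<sigma> (ts k)) (b - ts k) (flow_at r f \<sigma> ts k \<psi>)"
          using b k by (intro E1[OF P \<psi>]) auto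
        also have "\<dots> = Tsg r f q (b - a) (Tsg r f q (a - ts k) (flow_at r f \<sigma> ts k \<psi>))"
          using semigroup[OF flow_at_CC[OF P \<psi>], of "a - ts k" "b - a" q] k b q by simp
        also have "Tsg r f q (a - ts k) (flow_at r f \<sigma> ts k \<psi>) = Fl \<sigma> ts \<psi> a"
          using Fl_at[OF sm k] q by simp
        finally show ?thesis .
      qed
    qed
  next
    case (Suc m)
    show ?case
    proof (intro allI impI)
      fix b assume b: "a \<le> b" "b \<le> ts (k + Suc m + 1)" and c: "\<forall>s\<in>{a..<b}. \<sigma> s = q"
      show "Fl \<sigma> ts \<psi> b = Tsg r f q (b - a) (Fl \<sigma> ts \<psi> a)"
      proof (cases "b \<le> ts (k + m + 1)")
        case True
        have "a \<le> b \<longrightarrow> b \<le> ts (k + m + 1) \<longrightarrow> (\<forall>s\<in>{a..<b}. \<sigma> s = q) \<longrightarrow>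
          Fl \<sigma> ts \<psi> b = Tsg r f q (b - a) (Fl \<sigma> ts \<psi> a)" using Suc.IH by (rule spec)
        then show ?thesis using b(1) True c by simp
      next
        case False
        define c0 where "c0 = ts (k + m + 1)"
        have "ts (Suc k) \<le> c0" unfolding c0_def by (rule strict_mono_leD[OF sm]) simp
        then have ac: "a \<le> c0" using k by simp
        have cb: "c0 < b" using False by (simp add: c0_def)
        have Fc: "Fl \<sigma> ts \<psi> c0 = Tsg r f q (c0 - a) (Fl \<sigma> ts \<psi> a)"
        proof -
          have "\<forall>s\<in>{a..<c0}. \<sigma> s = q" using c cb by simp
          moreover have "a \<le> c0 \<longrightarrow> c0 \<le> ts (k + m + 1) \<longrightarrow> (\<forall>s\<in>{a..<c0}. \<sigma> s = q) \<longrightarrow>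
            Fl \<sigma> ts \<psi> c0 = Tsg r f q (c0 - a) (Fl \<sigma> ts \<psi> a)" using Suc.IH by (rule spec)
          ultimately show ?thesis using ac by (simp add: c0_def)
        qed
        have "c0 \<in> {a..<b}" using ac cb by simp
        then have qc: "\<sigma> c0 = q" using c by blast
        have bint: "b \<in> {ts (k + m + 1)..ts (Suc (k + m + 1))}" using b cb by (simp add: c0_def)
        have "Fl \<sigma> ts \<psi> b = Tsg r f (\<sigma> c0) (b - c0) (flow_at r f \<sigma> ts (k + m + 1) \<psi>)"
          using E1[OF P \<psi> bint] by (simp add: c0_def)
        also have "flow_at r f \<sigma> ts (k + m + 1) \<psi> = Fl \<sigma> ts \<psi> c0"
          unfolding c0_def by (rule Fl_node[OF P \<psi>, symmetric])
        also have "Tsg r f (\<sigma> c0) (b - c0) (Fl \<sigma> ts \<psi> c0) = Tsg r f q (b - a) (Fl \<sigma> ts \<psi> a)"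
        proof -
          have "Tsg r f q (b - c0) (Tsg r f q (c0 - a) (Fl \<sigma> ts \<psi> a)) = Tsg r f q (c0 - a + (b - c0)) (Fl \<sigma> ts \<psi> a)"
            using ac cb by (intro semigroup[OF FaCC]) auto
          also have "c0 - a + (b - c0) = b - a" by simp
          finally show ?thesis unfolding qc Fc .
        qed
        finally show ?thesis .
      qed
    qed
  qed
  obtain j where j: "b < ts j" using ts_beyond[OF P] by blast
  have "ts j \<le> ts (k + j + 1)" by (rule strict_mono_leD[OF sm]) simp
  then have bj: "b \<le> ts (k + j + 1)" using j by simp
  have "\<forall>s\<in>{a..<b}. \<sigma> s = q" using const by blast
  then show ?thesis using main[of j, rule_format, OF ab(2) bj] by blast
qed

lemma IND:
  assumes P: "PC_part \<sigma> ts" and P': "PC_part \<sigma> ts'" and \<psi>: "\<psi> \<in> CC r" and t: "t \<ge> 0"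
  shows "Fl \<sigma> ts' \<psi> t = Fl \<sigma> ts \<psi> t"
proof -
  have sm: "strict_mono ts" by (rule PC_part_D(2)[OF P])
  have F0: "Fl \<sigma> ts \<psi> 0 = \<psi>" if "PC_part \<sigma> ts" for ts
  proof -
    have "0 \<in> {ts 0..<ts (Suc 0)}"
      using PC_part_D(1,2)[OF that] strict_monoD[of ts 0 "Suc 0"] by simp
    then show ?thesis using Fl_node[OF that \<psi>, of 0] PC_part_D(1)[OF that] by simp
  qed
  have nodes: "Fl \<sigma> ts' \<psi> (ts k) = Fl \<sigma> ts \<psi> (ts k)" for k
  proof (induction k)
    case 0 then show ?case using F0[OF P] F0[OF P'] PC_part_D(1)[OF P] by simp
  next
    case (Suc k)
    have le: "ts k \<le> ts (Suc k)" by (rule strict_mono_leD[OF sm]) simp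
    have c: "\<And>s. s \<in> {ts k..<ts (Suc k)} \<Longrightarrow> \<sigma> s = \<sigma> (ts k)" by (rule PC_part_D(4)[OF P])
    have "Fl \<sigma> ts' \<psi> (ts (Suc k)) = Tsg r f (\<sigma> (ts k)) (ts (Suc k) - ts k) (Fl \<sigma> ts' \<psi> (ts k))"
      by (rule E2[OF P' \<psi> ts_nonneg[OF P] le c])
    also have "\<dots> = Tsg r f (\<sigma> (ts k)) (ts (Suc k) - ts k) (Fl \<sigma> ts \<psi> (ts k))" using Suc by simp
    also have "\<dots> = Fl \<sigma> ts \<psi> (ts (Suc k))"
      by (rule E2[OF P \<psi> ts_nonneg[OF P] le c, symmetric])
    finally show ?case .
  qed
  obtain k where k: "t \<in> {ts k..<ts (Suc k)}" using idx_ex[OF P t] by blast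
  have c: "\<And>s. s \<in> {ts k..<t} \<Longrightarrow> \<sigma> s = \<sigma> (ts k)" using PC_part_D(4)[OF P] k by auto
  have le: "ts k \<le> t" using k by simp
  show ?thesis
    using E2[OF P' \<psi> ts_nonneg[OF P] le c] E2[OF P \<psi> ts_nonneg[OF P] le c] nodes[of k] by simp
qed

definition wl :: "(real \<Rightarrow> 'q) \<Rightarrow> (nat \<Rightarrow> real) \<Rightarrow> nat \<Rightarrow> ('q \<times> real) list" where
  "wl \<sigma> ts k = map (\<lambda>j. (\<sigma> (ts j), ts (Suc j) - ts j)) [0..<k]"

lemma wl_Suc: "wl \<sigma> ts (Suc k) = wl \<sigma> ts k @ [(\<sigma> (ts k), ts (Suc k) - ts k)]"
  by (simp add: wl_def)

lemma flow_at_run: "flow_at r f \<sigma> ts k \<psi> = run (wl \<sigma> ts k) \<psi>"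
  by (induction k) (simp_all add: wl_Suc run_append wl_def)

lemma dur_wl: "dur (wl \<sigma> ts k) = ts k - ts 0"
  by (induction k) (simp_all add: wl_Suc, simp add: wl_def)

lemma okw_wl: "strict_mono ts \<Longrightarrow> okw (wl \<sigma> ts k)"
  by (induction k) (simp add: wl_def, simp add: wl_Suc strict_mono_leD)

lemma FL1:
  assumes "\<sigma> \<in> PC" "t \<ge> 0" "\<psi> \<in> CC r"
  shows "\<exists>w. okw w \<and> dur w = t \<and> flow r f t \<psi> \<sigma> = run w \<psi>"
proof -
  define ts where "ts = (SOME ts. PC_part \<sigma> ts)"
  have "\<exists>ts. PC_part \<sigma> ts" using assms(1) by (simp add: PC_def)
  then have P: "PC_part \<sigma> ts" unfolding ts_def by (rule someI_ex)
  obtain k where k: "t \<in> {ts k..<ts (Suc k)}" using idx_ex[OF P assms(2)] by blast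
  have sm: "strict_mono ts" by (rule PC_part_D(2)[OF P])
  have "flow r f t \<psi> \<sigma> = Tsg r f (\<sigma> (ts k)) (t - ts k) (flow_at r f \<sigma> ts k \<psi>)"
    unfolding flow_Fl ts_def[symmetric] by (rule Fl_at[OF sm k])
  also have "\<dots> = run (wl \<sigma> ts k @ [(\<sigma> (ts k), t - ts k)]) \<psi>"
    by (simp add: run_append flow_at_run)
  finally show ?thesis
    using k okw_wl[OF sm] dur_wl PC_part_D(1)[OF P]
    by (intro exI[of _ "wl \<sigma> ts k @ [(\<sigma> (ts k), t - ts k)]"]) auto
qed

end

context sys
begin

lemma filter_pos:
  "okw w \<Longrightarrow> \<exists>w'. (\<forall>p\<in>set w'. snd p > 0) \<and> dur w' = dur w \<and> (\<forall>\<psi>\<in>CC r. run w' \<psi> = run w \<psi>)"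
proof (induction w)
  case Nil then show ?case by (intro exI[of _ "[]"]) simp
next
  case (Cons p w)
  obtain q d where p: "p = (q, d)" by (cases p)
  have d: "d \<ge> 0" and w: "okw w" using Cons.prems p by auto
  obtain w' where w': "\<forall>p\<in>set w'. snd p > 0" "dur w' = dur w" "\<forall>\<psi>\<in>CC r. run w' \<psi> = run w \<psi>"
    using Cons.IH[OF w] by blast
  show ?case
  proof (cases "d > 0")
    case True
    have "\<forall>\<psi>\<in>CC r. run ((q, d) # w') \<psi> = run (p # w) \<psi>"
      using w'(3) d p by (simp add: Tsg_CC)
    then show ?thesis using w' True p by (intro exI[of _ "(q, d) # w'"]) simp
  next
    case False
    then have d0: "d = 0" using d by simp
    have "\<forall>\<psi>\<in>CC r. run w' \<psi> = run (p # w) \<psi>"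
      using w'(3) p d0 by (simp add: Tsg_0)
    then show ?thesis using w' p d0 by (intro exI[of _ w']) simp
  qed
qed

lemma FL2_pos:
  assumes pos: "\<forall>p\<in>set w. snd p > 0" and \<psi>: "\<psi> \<in> CC r"
  shows "\<exists>\<sigma>\<in>PC. flow r f (dur w) \<psi> \<sigma> = run w \<psi>"
proof -
  define n where "n = length w"
  define ds where "ds = (\<lambda>j. if j < n then snd (w ! j) else 1)"
  define qs where "qs = (\<lambda>j. if j < n then fst (w ! j) else undefined)"
  define ts where "ts = (\<lambda>j. \<Sum>i<j. ds i)"
  define \<sigma> where "\<sigma> = (\<lambda>t. qs (SOME k. t \<in> {ts k..<ts (Suc k)}))"
  define c where "c = Min (insert 1 (snd ` set w))"
  have fin: "finite (insert 1 (snd ` set w))" by simp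
  have c: "c > 0" unfolding c_def using pos by (subst Min_gr_iff[OF fin]) auto
  have dsc: "c \<le> ds j" for j
  proof (cases "j < n")
    case True
    then have "w ! j \<in> set w" unfolding n_def by simp
    then have "snd (w ! j) \<in> insert 1 (snd ` set w)" by simp
    then show ?thesis unfolding c_def ds_def using True Min_le[OF fin] by simp
  next
    case False
    then show ?thesis unfolding c_def ds_def using Min_le[OF fin, of 1] by simp
  qed
  have tsSuc: "ts (Suc j) = ts j + ds j" for j by (simp add: ts_def)
  have sm: "strict_mono ts"
    unfolding strict_mono_Suc_iff using tsSuc dsc c by (metis less_add_same_cancel1 order_less_le_trans)
  have tsge: "ts j \<ge> c * j" for j
  proof (induction j)
    case 0 then show ?case by (simp add: ts_def)
  next
    case (Suc j) then show ?case using tsSuc[of j] dsc[of j] by (simp add: algebra_simps)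
  qed
  have lim: "filterlim ts at_top sequentially"
    unfolding filterlim_at_top
  proof
    fix Z :: real
    obtain N :: nat where N: "Z / c \<le> N" using real_arch_simple by blast
    have "Z \<le> ts j" if "N \<le> j" for j
    proof -
      have "Z = c * (Z / c)" using c by simp
      also have "\<dots> \<le> c * N" using N c by (intro mult_left_mono) auto
      also have "\<dots> \<le> c * j" using that c by (intro mult_left_mono) auto
      also have "\<dots> \<le> ts j" by (rule tsge)
      finally show ?thesis .
    qed
    then show "eventually (\<lambda>j. Z \<le> ts j) sequentially" unfolding eventually_sequentially by blast
  qed
  have sig: "\<sigma> t = qs k" if "t \<in> {ts k..<ts (Suc k)}" for t k
  proof -
    have "(SOME k. t \<in> {ts k..<ts (Suc k)}) = k"
    proof (rule some_equality)
      show "t \<in> {ts k..<ts (Suc k)}" by (rule that)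
    next
      fix j assume "t \<in> {ts j..<ts (Suc j)}"
      then show "j = k" using idx_unique[OF sm _ that] by blast
    qed
    then show ?thesis by (simp add: \<sigma>_def)
  qed
  have sigts: "\<sigma> (ts k) = qs k" for k
    using sig[of "ts k" k] strict_monoD[OF sm, of k "Suc k"] by simp
  have P: "PC_part \<sigma> ts"
    unfolding PC_part_def
  proof (intro conjI allI ballI)
    show "ts 0 = 0" by (simp add: ts_def)
    show "strict_mono ts" by (rule sm)
    show "filterlim ts at_top sequentially" by (rule lim)
  next
    fix k t assume "t \<in> {ts k..<ts (Suc k)}"
    then show "\<sigma> t = \<sigma> (ts k)" using sig sigts by simp
  qed
  then have \<sigma>PC: "\<sigma> \<in> PC" unfolding PC_def by blast
  have wlw: "wl \<sigma> ts n = w"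
  proof (rule nth_equalityI)
    show "length (wl \<sigma> ts n) = length w" by (simp add: wl_def n_def)
  next
    fix i assume "i < length (wl \<sigma> ts n)"
    then have i: "i < n" by (simp add: wl_def)
    have "wl \<sigma> ts n ! i = (\<sigma> (ts i), ts (Suc i) - ts i)" using i by (simp add: wl_def)
    also have "\<dots> = (qs i, ds i)" using sigts tsSuc by simp
    also have "\<dots> = w ! i" using i by (simp add: qs_def ds_def)
    finally show "wl \<sigma> ts n ! i = w ! i" .
  qed
  have durw: "dur w = ts n" using dur_wl[of \<sigma> ts n] wlw by (simp add: ts_def)
  define ts' where "ts' = (SOME ts. PC_part \<sigma> ts)"
  have "\<exists>ts. PC_part \<sigma> ts" using P by blast
  then have P': "PC_part \<sigma> ts'" unfolding ts'_def by (rule someI_ex)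
  have "flow r f (dur w) \<psi> \<sigma> = Fl \<sigma> ts' \<psi> (ts n)" unfolding flow_Fl ts'_def durw ..
  also have "\<dots> = Fl \<sigma> ts \<psi> (ts n)" by (rule IND[OF P P' \<psi> ts_nonneg[OF P]])
  also have "\<dots> = flow_at r f \<sigma> ts n \<psi>" by (rule Fl_node[OF P \<psi>])
  also have "\<dots> = run w \<psi>" by (simp add: flow_at_run wlw)
  finally show ?thesis using \<sigma>PC by blast
qed

lemma FL2:
  assumes "okw w" "\<psi> \<in> CC r"
  shows "\<exists>\<sigma>\<in>PC. flow r f (dur w) \<psi> \<sigma> = run w \<psi>"
proof -
  obtain w' where w': "\<forall>p\<in>set w'. snd p > 0" "dur w' = dur w" "\<forall>\<psi>\<in>CC r. run w' \<psi> = run w \<psi>"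
    using filter_pos[OF assms(1)] by blast
  show ?thesis using FL2_pos[OF w'(1) assms(2)] w'(2,3) assms(2) by simp
qed

lemma UGES_iff:
  "UGES r f \<longleftrightarrow> (\<exists>M>0. \<exists>lam>0. \<forall>w \<psi>. okw w \<longrightarrow> \<psi> \<in> CC r \<longrightarrow>
      cnorm r (run w \<psi>) \<le> M * exp (- lam * dur w) * cnorm r \<psi>)"
proof
  assume "UGES r f"
  then obtain M lam where M: "M > 0" "lam > 0" and
    U: "\<forall>t\<ge>0. \<forall>\<phi>\<in>CC r. \<forall>\<sigma>\<in>PC. cnorm r (flow r f t \<phi> \<sigma>) \<le> M * exp (- lam * t) * cnorm r \<phi>"
    unfolding UGES_def by blast
  have "cnorm r (run w \<psi>) \<le> M * exp (- lam * dur w) * cnorm r \<psi>" if wp: "okw w" "\<psi> \<in> CC r" for w \<psi>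
  proof -
    obtain \<sigma> where \<sigma>: "\<sigma> \<in> PC" "flow r f (dur w) \<psi> \<sigma> = run w \<psi>" using FL2[OF wp] by blast
    show ?thesis using U dur_nonneg[OF wp(1)] wp(2) \<sigma> by metis
  qed
  then show "\<exists>M>0. \<exists>lam>0. \<forall>w \<psi>. okw w \<longrightarrow> \<psi> \<in> CC r \<longrightarrow>
      cnorm r (run w \<psi>) \<le> M * exp (- lam * dur w) * cnorm r \<psi>" using M by blast
next
  assume "\<exists>M>0. \<exists>lam>0. \<forall>w \<psi>. okw w \<longrightarrow> \<psi> \<in> CC r \<longrightarrow>
      cnorm r (run w \<psi>) \<le> M * exp (- lam * dur w) * cnorm r \<psi>"
  then obtain M lam where M: "M > 0" "lam > 0" and
    U: "\<And>w \<psi>. okw w \<Longrightarrow> \<psi> \<in> CC r \<Longrightarrow> cnorm r (run w \<psi>) \<le> M * exp (- lam * dur w) * cnorm r \<psi>"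
    by blast
  have "cnorm r (flow r f t \<phi> \<sigma>) \<le> M * exp (- lam * t) * cnorm r \<phi>"
    if tp: "t \<ge> 0" "\<phi> \<in> CC r" "\<sigma> \<in> PC" for t \<phi> \<sigma>
  proof -
    obtain w where w: "okw w" "dur w = t" "flow r f t \<phi> \<sigma> = run w \<phi>"
      using FL1[OF tp(3,1,2)] by blast
    show ?thesis using U[OF w(1) tp(2)] w(2,3) by simp
  qed
  then show "UGES r f" unfolding UGES_def using M by blast
qed

end

context sys
begin

lemma DC1:
  assumes "Dini_up r f q V \<psi> \<le> ereal a" "\<epsilon> > 0"
  shows "\<exists>\<delta>>0. \<forall>h. 0 < h \<and> h < \<delta> \<longrightarrow> (V (Tsg r f q h \<psi>) - V \<psi>) / h < a + \<epsilon>"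
proof -
  have "ereal (a + \<epsilon>) > ereal a" using assms(2) by simp
  then have "eventually (\<lambda>h. ereal (a + \<epsilon>) > ereal ((V (Tsg r f q h \<psi>) - V \<psi>) / h)) (at_right 0)"
    using assms(1) unfolding Dini_up_def Limsup_le_iff by blast
  then have "eventually (\<lambda>h. (V (Tsg r f q h \<psi>) - V \<psi>) / h < a + \<epsilon>) (at_right (0::real))"
    by simp
  then show ?thesis unfolding eventually_at_right_field by auto
qed

lemma DC2:
  assumes "\<And>\<epsilon>. \<epsilon> > 0 \<Longrightarrow> \<exists>\<delta>>0. \<forall>h. 0 < h \<and> h < \<delta> \<longrightarrow> (V (Tsg r f q h \<psi>) - V \<psi>) / h \<le> a + \<epsilon>"
  shows "Dini_up r f q V \<psi> \<le> ereal a"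
  unfolding Dini_up_def Limsup_le_iff
proof (intro allI impI)
  fix y :: ereal assume y: "y > ereal a"
  show "eventually (\<lambda>h. y > ereal ((V (Tsg r f q h \<psi>) - V \<psi>) / h)) (at_right 0)"
  proof (cases y)
    case (real b)
    then have "b > a" using y by simp
    then obtain \<delta> where \<delta>: "\<delta> > 0" "\<forall>h. 0 < h \<and> h < \<delta> \<longrightarrow> (V (Tsg r f q h \<psi>) - V \<psi>) / h \<le> a + (b - a) / 2"
      using assms[of "(b - a) / 2"] by auto
    have "eventually (\<lambda>h. (V (Tsg r f q h \<psi>) - V \<psi>) / h < b) (at_right (0::real))"
      unfolding eventually_at_right_field
    proof (intro exI[of _ \<delta>] conjI allI impI)
      fix h :: real assume "0 < h" "h < \<delta>"
      then have "(V (Tsg r f q h \<psi>) - V \<psi>) / h \<le> a + (b - a) / 2" using \<delta>(2) by blast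
      moreover have "a + (b - a) / 2 < b" using \<open>b > a\<close> by (simp add: field_simps)
      ultimately show "(V (Tsg r f q h \<psi>) - V \<psi>) / h < b" by (rule le_less_trans)
    qed (use \<delta> in simp)
    then show ?thesis using real by simp
  next
    case PInf then show ?thesis by simp
  next
    case MInf then show ?thesis using y by simp
  qed
qed

context
  fixes V :: "(real \<Rightarrow> real^'n) \<Rightarrow> real" and p c :: real
  assumes Vnn: "\<forall>\<psi>\<in>CC r. V \<psi> \<ge> 0" and p: "p > 0" and c: "c > 0"
    and LC: "\<forall>\<psi>\<in>CC r. \<forall>q. \<forall>t>0. continuous (at_left t) (\<lambda>s. V (Tsg r f q s \<psi>))"
    and DV: "\<forall>\<psi>\<in>CC r. \<forall>q. Dini_up r f q V \<psi> \<le> ereal (- (cnorm r \<psi> powr p))"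
    and VB: "\<forall>\<psi>\<in>CC r. V \<psi> \<le> c * cnorm r \<psi> powr p"
begin

lemma single_decr:
  assumes \<psi>: "\<psi> \<in> CC r" and d: "d \<ge> 0" and m: "m \<ge> 0"
    and low: "\<And>s. s \<in> {0..d} \<Longrightarrow> m \<le> cnorm r (Tsg r f q s \<psi>)"
  shows "V (Tsg r f q d \<psi>) + m powr p * d \<le> V \<psi>"
proof -
  define h where "h = (\<lambda>s. V (Tsg r f q s \<psi>) + m powr p * s)"
  have "h d \<le> h 0"
  proof (rule mono_dini[OF d])
    fix t assume t: "t \<in> {0<..d}"
    have "continuous (at_left t) (\<lambda>s. V (Tsg r f q s \<psi>))" using LC \<psi> t by auto
    then have "((\<lambda>s. V (Tsg r f q s \<psi>)) \<longlongrightarrow> V (Tsg r f q t \<psi>)) (at_left t)"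
      by (simp add: continuous_within)
    then show "(h \<longlongrightarrow> h t) (at_left t)" unfolding h_def
      by (intro tendsto_intros) (auto intro: tendsto_ident_at)
  next
    fix t \<epsilon> :: real assume t: "t \<in> {0..<d}" and \<epsilon>: "\<epsilon> > 0"
    define \<xi> where "\<xi> = Tsg r f q t \<psi>"
    have t0: "t \<ge> 0" using t by simp
    have \<xi>CC: "\<xi> \<in> CC r" unfolding \<xi>_def by (rule Tsg_CC[OF \<psi> t0])
    obtain \<delta> where \<delta>: "\<delta> > 0" and
      B: "\<forall>k. 0 < k \<and> k < \<delta> \<longrightarrow> (V (Tsg r f q k \<xi>) - V \<xi>) / k < - (cnorm r \<xi> powr p) + \<epsilon>"
      using DC1[OF _ \<epsilon>, of q V \<xi> "- (cnorm r \<xi> powr p)"] DV \<xi>CC by blast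
    have mp: "m powr p \<le> cnorm r \<xi> powr p"
      using low[of t] t m p unfolding \<xi>_def by (intro powr_mono2) auto
    have "h s \<le> h t + \<epsilon> * (s - t)" if s: "t < s" "s < t + \<delta>" for s
    proof -
      have k: "0 < s - t" "s - t < \<delta>" using s by auto
      have "Tsg r f q (s - t) \<xi> = Tsg r f q s \<psi>"
        unfolding \<xi>_def using semigroup[OF \<psi> t0, of "s - t" q] k by simp
      then have "(V (Tsg r f q s \<psi>) - V \<xi>) / (s - t) < - (cnorm r \<xi> powr p) + \<epsilon>"
        using B k by metis
      then have "V (Tsg r f q s \<psi>) - V \<xi> < (s - t) * (- (cnorm r \<xi> powr p) + \<epsilon>)"
        using k by (simp add: field_simps)
      then have "V (Tsg r f q s \<psi>) - V \<xi> \<le> (s - t) * (- (m powr p) + \<epsilon>)"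
        using mp k by (smt (verit, best) mult_left_mono)
      then show ?thesis unfolding h_def \<xi>_def by (simp add: algebra_simps)
    qed
    then show "\<exists>\<delta>>0. \<forall>s. t < s \<and> s < t + \<delta> \<longrightarrow> h s \<le> h t + \<epsilon> * (s - t)"
      using \<delta> by blast
  qed
  then show ?thesis unfolding h_def using Tsg_0[OF \<psi>] by simp
qed

lemma decr:
  "okw w \<Longrightarrow> \<psi> \<in> CC r \<Longrightarrow> m \<ge> 0 \<Longrightarrow> (\<And>t. t \<in> {0..dur w} \<Longrightarrow> m \<le> cnorm r (run (pre t w) \<psi>))
   \<Longrightarrow> V (run w \<psi>) + m powr p * dur w \<le> V \<psi>"
proof (induction w arbitrary: \<psi>)
  case Nil then show ?case by simp
next
  case (Cons p0 w)
  obtain q d where p0: "p0 = (q, d)" by (cases p0)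
  have d: "d \<ge> 0" and w: "okw w" using Cons.prems(1) p0 by auto
  have dw: "dur w \<ge> 0" by (rule dur_nonneg[OF w])
  define \<psi>' where "\<psi>' = Tsg r f q d \<psi>"
  have \<psi>'CC: "\<psi>' \<in> CC r" unfolding \<psi>'_def by (rule Tsg_CC[OF Cons.prems(2) d])
  have s1: "V \<psi>' + m powr p * d \<le> V \<psi>"
    unfolding \<psi>'_def
  proof (rule single_decr[OF Cons.prems(2) d Cons.prems(3)])
    fix s assume s: "s \<in> {0..d}"
    then have "s \<in> {0..dur (p0 # w)}" using p0 dw by auto
    then have "m \<le> cnorm r (run (pre s (p0 # w)) \<psi>)" by (rule Cons.prems(4))
    then show "m \<le> cnorm r (Tsg r f q s \<psi>)" using s p0 by simp
  qed
  have s2: "V (run w \<psi>') + m powr p * dur w \<le> V \<psi>'"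
  proof (rule Cons.IH[OF w \<psi>'CC Cons.prems(3)])
    fix t assume t: "t \<in> {0..dur w}"
    then have "t + d \<in> {0..dur (p0 # w)}" using p0 d by auto
    then have m: "m \<le> cnorm r (run (pre (t + d) (p0 # w)) \<psi>)" by (rule Cons.prems(4))
    show "m \<le> cnorm r (run (pre t w) \<psi>')"
    proof (cases "t = 0")
      case True
      then show ?thesis using m p0 run_pre0[OF w \<psi>'CC] by (simp add: \<psi>'_def)
    next
      case False
      then have "\<not> t + d \<le> d" using t by simp
      then show ?thesis using m p0 by (simp add: \<psi>'_def)
    qed
  qed
  show ?case using s1 s2 p0 by (simp add: \<psi>'_def algebra_simps)
qed

lemma Kbound:
  assumes w: "okw w" and \<psi>: "\<psi> \<in> CC r"
  shows "cnorm r (run w \<psi>) \<le> exp L * max 1 (c powr (1/p)) * cnorm r \<psi>"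
proof -
  have n\<psi>: "cnorm r \<psi> \<ge> 0" by (rule cnorm_nonneg[OF r \<psi>])
  have eL: "exp L \<ge> 1" using Lpos by simp
  show ?thesis
  proof (cases "dur w \<le> 1")
    case True
    have "cnorm r (run w \<psi>) \<le> exp (L * dur w) * cnorm r \<psi>" by (rule run_bound[OF w \<psi>])
    also have "\<dots> \<le> exp L * cnorm r \<psi>"
      using True Lpos n\<psi> by (intro mult_right_mono) (auto simp: mult_left_le)
    also have "\<dots> \<le> exp L * max 1 (c powr (1/p)) * cnorm r \<psi>"
      using n\<psi> by (intro mult_right_mono) (auto simp: mult_le_cancel_left1 eL)
    finally show ?thesis .
  next
    case False
    define t1 where "t1 = dur w - 1"
    have t1: "0 \<le> t1" "t1 \<le> dur w" using False by (auto simp: t1_def)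
    define w1 where "w1 = pre t1 w"
    define w2 where "w2 = suf t1 w"
    have w1: "okw w1" unfolding w1_def by (rule okw_pre[OF w t1(1)])
    have w2: "okw w2" unfolding w2_def by (rule okw_suf[OF w t1(1)])
    have dw2: "dur w2 = 1" unfolding w2_def using dur_suf[OF w t1] by (simp add: t1_def)
    define \<xi>1 where "\<xi>1 = run w1 \<psi>"
    have \<xi>1CC: "\<xi>1 \<in> CC r" unfolding \<xi>1_def by (rule run_CC[OF w1 \<psi>])
    define F where "F = run w \<psi>"
    have F: "F = run w2 \<xi>1" unfolding F_def w2_def \<xi>1_def w1_def by (rule run_split[OF w t1(1) \<psi>])
    have FCC: "F \<in> CC r" unfolding F_def by (rule run_CC[OF w \<psi>])
    define m where "m = cnorm r F / exp L"
    have m0: "m \<ge> 0" unfolding m_def using cnorm_nonneg[OF r FCC] by simp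
    have low: "m \<le> cnorm r (run (pre t w2) \<xi>1)" if t: "t \<in> {0..dur w2}" for t
    proof -
      have t0: "t \<ge> 0" and t1': "t \<le> 1" using t dw2 by auto
      have "F = run (suf t w2) (run (pre t w2) \<xi>1)" unfolding F by (rule run_split[OF w2 t0 \<xi>1CC])
      then have "cnorm r F \<le> exp (L * dur (suf t w2)) * cnorm r (run (pre t w2) \<xi>1)"
        using run_bound[OF okw_suf[OF w2 t0] run_CC[OF okw_pre[OF w2 t0] \<xi>1CC]] by simp
      also have "\<dots> \<le> exp L * cnorm r (run (pre t w2) \<xi>1)"
        using dur_suf[OF w2 t0] dw2 t0 t1' Lpos cnorm_nonneg[OF r run_CC[OF okw_pre[OF w2 t0] \<xi>1CC]]
        by (intro mult_right_mono) (auto simp: mult_left_le)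
      finally show ?thesis unfolding m_def by (simp add: field_simps)
    qed
    have d2: "V F + m powr p * dur w2 \<le> V \<xi>1"
      unfolding F by (rule decr[OF w2 \<xi>1CC m0 low[unfolded F]])
    have d1: "V \<xi>1 + 0 powr p * dur w1 \<le> V \<psi>"
      unfolding \<xi>1_def by (rule decr[OF w1 \<psi> order_refl]) (rule cnorm_nonneg[OF r run_CC[OF okw_pre[OF w1] \<psi>]], simp)
    have "m powr p \<le> c * cnorm r \<psi> powr p"
      using d1 d2 dw2 VB \<psi> Vnn FCC by fastforce
    also have "c = (c powr (1/p)) powr p" using c p by (simp add: powr_powr)
    finally have "m powr p \<le> (c powr (1/p) * cnorm r \<psi>) powr p" by (simp add: powr_mult)
    then have mb: "m \<le> c powr (1/p) * cnorm r \<psi>"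
      using powr_less_mono2[OF p, of "c powr (1/p) * cnorm r \<psi>" m] n\<psi> by force
    have "cnorm r F = exp L * m" unfolding m_def by simp
    also have "\<dots> \<le> exp L * (c powr (1/p) * cnorm r \<psi>)" using mb by simp
    also have "\<dots> \<le> exp L * max 1 (c powr (1/p)) * cnorm r \<psi>"
      using n\<psi> by (simp add: mult_right_mono)
    finally show ?thesis unfolding F_def .
  qed
qed

lemma halve:
  assumes w: "okw w" and \<psi>: "\<psi> \<in> CC r"
    and T0: "dur w \<ge> c * (2 * (exp L * max 1 (c powr (1/p)))) powr p + 1"
  shows "cnorm r (run (pre (c * (2 * (exp L * max 1 (c powr (1/p)))) powr p + 1) w) \<psi>) \<le> cnorm r \<psi> / 2"
proof -
  define K where "K = exp L * max 1 (c powr (1/p))"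
  define T where "T = c * (2 * K) powr p + 1"
  have K1: "K \<ge> 1" unfolding K_def using Lpos by (simp add: one_le_exp_iff mult_ge1_I) 
  have T0': "T \<ge> 0" unfolding T_def using c by simp
  define w1 where "w1 = pre T w"
  have w1: "okw w1" unfolding w1_def by (rule okw_pre[OF w T0'])
  have dw1: "dur w1 = T" unfolding w1_def using dur_pre[OF w T0'] T0 by (simp add: T_def K_def)
  define F where "F = run w1 \<psi>"
  have n\<psi>: "cnorm r \<psi> \<ge> 0" by (rule cnorm_nonneg[OF r \<psi>])
  have FK: "cnorm r F \<le> K * cnorm r (run (pre t w1) \<psi>)" if t: "t \<in> {0..dur w1}" for t
  proof -
    have t0: "t \<ge> 0" using t by simp
    have "F = run (suf t w1) (run (pre t w1) \<psi>)" unfolding F_def by (rule run_split[OF w1 t0 \<psi>])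
    then show ?thesis
      using Kbound[OF okw_suf[OF w1 t0] run_CC[OF okw_pre[OF w1 t0] \<psi>]] by (simp add: K_def)
  qed
  have "cnorm r F \<le> cnorm r \<psi> / 2"
  proof (rule ccontr)
    assume "\<not> cnorm r F \<le> cnorm r \<psi> / 2"
    then have big: "cnorm r F > cnorm r \<psi> / 2" by simp
    show False
    proof (cases "cnorm r \<psi> = 0")
      case True
      have "cnorm r F \<le> K * cnorm r (run (pre 0 w1) \<psi>)" using FK[of 0] dur_nonneg[OF w1] by simp
      also have "\<dots> = 0" using run_pre0[OF w1 \<psi>] True by simp
      finally show False using big True by simp
    next
      case False
      then have n\<psi>': "cnorm r \<psi> > 0" using n\<psi> by simp
      define m where "m = cnorm r \<psi> / (2 * K)"
      have m0: "m \<ge> 0" unfolding m_def using n\<psi> K1 by simp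
      have low: "m \<le> cnorm r (run (pre t w1) \<psi>)" if t: "t \<in> {0..dur w1}" for t
      proof -
        have "m \<le> cnorm r F / K" unfolding m_def using big K1 by (simp add: field_simps)
        also have "\<dots> \<le> cnorm r (run (pre t w1) \<psi>)" using FK[OF t] K1 by (simp add: field_simps)
        finally show ?thesis .
      qed
      have "V F + m powr p * dur w1 \<le> V \<psi>" unfolding F_def by (rule decr[OF w1 \<psi> m0 low])
      then have "m powr p * T \<le> c * cnorm r \<psi> powr p"
        using VB \<psi> Vnn run_CC[OF w1 \<psi>] dw1 unfolding F_def by fastforce
      moreover have "m powr p = cnorm r \<psi> powr p / (2 * K) powr p" unfolding m_def by (rule powr_divide)
      ultimately have "cnorm r \<psi> powr p * T \<le> c * (2 * K) powr p * cnorm r \<psi> powr p"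
        using K1 by (simp add: field_simps)
      moreover have "cnorm r \<psi> powr p > 0" using n\<psi>' by simp
      ultimately have "T \<le> c * (2 * K) powr p" by simp
      then show False unfolding T_def by simp
    qed
  qed
  then show ?thesis by (simp add: F_def w1_def T_def K_def)
qed

lemma expb:
  assumes w: "okw w" and \<psi>: "\<psi> \<in> CC r"
  shows "cnorm r (run w \<psi>) \<le> (2 * (exp L * max 1 (c powr (1/p)))) *
           exp (- (ln 2 / (c * (2 * (exp L * max 1 (c powr (1/p)))) powr p + 1)) * dur w) * cnorm r \<psi>"
proof -
  define K where "K = exp L * max 1 (c powr (1/p))"
  define T where "T = c * (2 * K) powr p + 1"
  define lam where "lam = ln 2 / T"
  have K1: "K \<ge> 1" unfolding K_def using Lpos by (simp add: one_le_exp_iff mult_ge1_I)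
  have T1: "T \<ge> 1" unfolding T_def using c by simp
  have lamT: "lam * T = ln 2" unfolding lam_def using T1 by simp
  have lam0: "lam > 0" unfolding lam_def using T1 by simp
  have main: "\<forall>w \<psi>. okw w \<longrightarrow> \<psi> \<in> CC r \<longrightarrow> dur w < real n * T \<longrightarrow>
      cnorm r (run w \<psi>) \<le> 2 * K * exp (- lam * dur w) * cnorm r \<psi>" for n
  proof (induction n)
    case 0
    show ?case
    proof (intro allI impI)
      fix w :: "('q \<times> real) list" and \<psi> :: "real \<Rightarrow> real^'n"
      assume "okw w" "\<psi> \<in> CC r" "dur w < real 0 * T"
      then show "cnorm r (run w \<psi>) \<le> 2 * K * exp (- lam * dur w) * cnorm r \<psi>"
        using dur_nonneg[of w] by simp
    qed
  next
    case (Suc n)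
    show ?case
    proof (intro allI impI)
      fix w :: "('q \<times> real) list" and \<psi> :: "real \<Rightarrow> real^'n"
      assume w: "okw w" and \<psi>: "\<psi> \<in> CC r" and dw: "dur w < real (Suc n) * T"
      have n\<psi>: "cnorm r \<psi> \<ge> 0" by (rule cnorm_nonneg[OF r \<psi>])
      show "cnorm r (run w \<psi>) \<le> 2 * K * exp (- lam * dur w) * cnorm r \<psi>"
      proof (cases "dur w < T")
        case True
        have "lam * dur w \<le> lam * T" using True lam0 by simp
        then have "exp (- lam * dur w) \<ge> exp (- ln 2)" using lamT by simp
        then have e2: "exp (- lam * dur w) \<ge> 1 / 2" by (simp add: exp_minus)
        have "cnorm r (run w \<psi>) \<le> K * cnorm r \<psi>" using Kbound[OF w \<psi>] by (simp add: K_def)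
        also have "\<dots> \<le> 2 * K * exp (- lam * dur w) * cnorm r \<psi>"
          using e2 K1 n\<psi> by (intro mult_right_mono) (simp_all add: field_simps)
        finally show ?thesis .
      next
        case False
        then have T0: "0 \<le> T" "T \<le> dur w" using T1 by auto
        define \<xi> where "\<xi> = run (pre T w) \<psi>"
        have \<xi>CC: "\<xi> \<in> CC r" unfolding \<xi>_def by (rule run_CC[OF okw_pre[OF w T0(1)] \<psi>])
        have split: "run w \<psi> = run (suf T w) \<xi>" unfolding \<xi>_def by (rule run_split[OF w T0(1) \<psi>])
        have ds: "dur (suf T w) = dur w - T" by (rule dur_suf[OF w T0])
        have hv: "cnorm r \<xi> \<le> cnorm r \<psi> / 2"
          unfolding \<xi>_def T_def K_def by (rule halve[OF w \<psi>]) (use T0 in \<open>simp add: T_def K_def\<close>)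
        have "dur (suf T w) < real n * T" using ds dw by (simp add: algebra_simps)
        then have "cnorm r (run (suf T w) \<xi>) \<le> 2 * K * exp (- lam * dur (suf T w)) * cnorm r \<xi>"
          using Suc.IH okw_suf[OF w T0(1)] \<xi>CC by blast
        also have "\<dots> \<le> 2 * K * exp (- lam * dur (suf T w)) * (cnorm r \<psi> / 2)"
          using hv K1 by (intro mult_left_mono) auto
        also have "\<dots> = 2 * K * exp (- lam * dur w) * cnorm r \<psi> * (exp (lam * T) / 2)"
          by (simp add: ds algebra_simps exp_add[symmetric] exp_diff)
        also have "exp (lam * T) = 2" using lamT by simp
        finally show ?thesis using split by simp
      qed
    qed
  qed
  obtain n :: nat where n: "dur w / T \<le> n" using real_arch_simple by blast
  have "dur w < real (Suc n) * T" using n T1 by (simp add: field_simps)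
  then show ?thesis using main[of "Suc n"] w \<psi> by (simp add: K_def T_def lam_def)
qed

lemma UG_from_V: "UGES r f"
  unfolding UGES_iff
proof (intro exI conjI allI impI)
  define K where "K = exp L * max 1 (c powr (1/p))"
  have K1: "K \<ge> 1" unfolding K_def using Lpos by (simp add: one_le_exp_iff mult_ge1_I)
  show "2 * K > 0" using K1 by simp
  have "c * (2 * K) powr p \<ge> 0" using c by simp
  then have "c * (2 * K) powr p + 1 > 0" by linarith
  then show "ln 2 / (c * (2 * K) powr p + 1) > 0" by simp
  fix w and \<psi> :: "real \<Rightarrow> real^'n" assume "okw w" "\<psi> \<in> CC r"
  then show "cnorm r (run w \<psi>) \<le> 2 * K * exp (- (ln 2 / (c * (2 * K) powr p + 1)) * dur w) * cnorm r \<psi>"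
    using expb unfolding K_def by simp
qed

end

lemma I3:
  assumes "\<exists>V p c. (\<forall>\<psi>\<in>CC r. V \<psi> \<ge> 0) \<and> p > 0 \<and> c > 0 \<and>
              (\<forall>\<psi>\<in>CC r. \<forall>q. \<forall>t>0. continuous (at_left t) (\<lambda>s. V (Tsg r f q s \<psi>))) \<and>
              (\<forall>\<psi>\<in>CC r. \<forall>q. Dini_up r f q V \<psi> \<le> ereal (- (cnorm r \<psi> powr p))) \<and>
              (\<forall>\<psi>\<in>CC r. V \<psi> \<le> c * cnorm r \<psi> powr p)"
  shows "UGES r f"
  using assms UG_from_V by blast

end

context sys
begin

lemma leftcont:
  assumes V: "ccont r V" and \<psi>: "\<psi> \<in> CC r" and t: "t > 0"
  shows "continuous (at_left t) (\<lambda>s. V (Tsg r f q s \<psi>))"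
  unfolding continuous_within tendsto_iff
proof (intro allI impI)
  fix \<epsilon> :: real assume \<epsilon>: "\<epsilon> > 0"
  define \<phi>0 where "\<phi>0 = Tsg r f q t \<psi>"
  have \<phi>0: "\<phi>0 \<in> CC r" unfolding \<phi>0_def using \<psi> t by (simp add: Tsg_CC)
  obtain \<delta>1 where \<delta>1: "\<delta>1 > 0" and
    C: "\<forall>\<psi>'\<in>CC r. cnorm r (\<psi>' - \<phi>0) < \<delta>1 \<longrightarrow> dist (V \<psi>') (V \<phi>0) < \<epsilon>"
    using V \<phi>0 \<epsilon> unfolding ccont_def by blast
  obtain \<delta>2 where \<delta>2: "\<delta>2 > 0" and
    T: "\<forall>s\<ge>0. \<bar>s - t\<bar> < \<delta>2 \<longrightarrow> cnorm r (Tsg r f q s \<psi> - Tsg r f q t \<psi>) < \<delta>1"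
    using traj_cont[OF \<psi> _ \<delta>1, of t q] t by auto
  have "max 0 (t - \<delta>2) < t" using t \<delta>2 by simp
  then have ev: "eventually (\<lambda>s. s \<in> {max 0 (t - \<delta>2)<..<t}) (at_left t)"
    by (rule eventually_at_left_real)
  show "eventually (\<lambda>s. dist (V (Tsg r f q s \<psi>)) (V (Tsg r f q t \<psi>)) < \<epsilon>) (at_left t)"
    using ev
  proof (rule eventually_mono)
    fix s assume s: "s \<in> {max 0 (t - \<delta>2)<..<t}"
    then have "s \<ge> 0" "\<bar>s - t\<bar> < \<delta>2" by auto
    then have "cnorm r (Tsg r f q s \<psi> - \<phi>0) < \<delta>1" using T unfolding \<phi>0_def by blast
    moreover have "Tsg r f q s \<psi> \<in> CC r" using \<open>s \<ge> 0\<close> \<psi> by (simp add: Tsg_CC)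
    ultimately show "dist (V (Tsg r f q s \<psi>)) (V (Tsg r f q t \<psi>)) < \<epsilon>"
      using C unfolding \<phi>0_def by blast
  qed
qed

lemma I2:
  assumes "\<exists>V p cl cu. ccont r V \<and> (\<forall>\<psi>\<in>CC r. V \<psi> \<ge> 0) \<and> p > 0 \<and> cl > 0 \<and> cu > 0 \<and>
              (\<forall>\<psi>\<in>CC r. cl * cnorm r \<psi> powr p \<le> V \<psi> \<and> V \<psi> \<le> cu * cnorm r \<psi> powr p) \<and>
              (\<forall>\<psi>\<in>CC r. \<forall>q. Dini_up r f q V \<psi> \<le> ereal (- (cnorm r \<psi> powr p)))"
  shows "\<exists>V p c. (\<forall>\<psi>\<in>CC r. V \<psi> \<ge> 0) \<and> p > 0 \<and> c > 0 \<and>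
              (\<forall>\<psi>\<in>CC r. \<forall>q. \<forall>t>0. continuous (at_left t) (\<lambda>s. V (Tsg r f q s \<psi>))) \<and>
              (\<forall>\<psi>\<in>CC r. \<forall>q. Dini_up r f q V \<psi> \<le> ereal (- (cnorm r \<psi> powr p))) \<and>
              (\<forall>\<psi>\<in>CC r. V \<psi> \<le> c * cnorm r \<psi> powr p)"
proof -
  obtain V p cl cu where V: "ccont r V" "\<forall>\<psi>\<in>CC r. V \<psi> \<ge> 0" "p > 0" "cl > 0" "cu > 0"
    "\<forall>\<psi>\<in>CC r. cl * cnorm r \<psi> powr p \<le> V \<psi> \<and> V \<psi> \<le> cu * cnorm r \<psi> powr p"
    "\<forall>\<psi>\<in>CC r. \<forall>q. Dini_up r f q V \<psi> \<le> ereal (- (cnorm r \<psi> powr p))"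
    using assms by blast
  have "\<forall>\<psi>\<in>CC r. \<forall>q. \<forall>t>0. continuous (at_left t) (\<lambda>s. V (Tsg r f q s \<psi>))"
    using leftcont[OF V(1)] by blast
  then show ?thesis using V by blast
qed

end

context sys
begin

context
  fixes M lam0 :: real
  assumes M: "M > 0" and lam0: "lam0 > 0"
    and U: "\<And>w \<psi>. okw w \<Longrightarrow> \<psi> \<in> CC r \<Longrightarrow> cnorm r (run w \<psi>) \<le> M * exp (- lam0 * dur w) * cnorm r \<psi>"
begin

definition lam :: real where "lam = lam0 / 2"

definition S :: "(real \<Rightarrow> real^'n) \<Rightarrow> real" where
  "S \<psi> = (SUP w\<in>{w. okw w}. exp (lam * dur w) * cnorm r (run w \<psi>))"

lemma lam_pos: "lam > 0" using lam0 by (simp add: lam_def)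

lemma term_bound:
  assumes "okw w" "\<psi> \<in> CC r"
  shows "exp (lam * dur w) * cnorm r (run w \<psi>) \<le> M * exp (- lam * dur w) * cnorm r \<psi>"
proof -
  have "exp (lam * dur w) * cnorm r (run w \<psi>) \<le> exp (lam * dur w) * (M * exp (- lam0 * dur w) * cnorm r \<psi>)"
    by (rule mult_left_mono[OF U[OF assms]]) simp
  also have "\<dots> = M * (exp (lam * dur w) * exp (- lam0 * dur w)) * cnorm r \<psi>" by simp
  also have "exp (lam * dur w) * exp (- lam0 * dur w) = exp (- lam * dur w)"
    by (simp add: exp_add[symmetric] lam_def algebra_simps)
  finally show ?thesis .
qed

lemma term_bound2:
  assumes "okw w" "\<psi> \<in> CC r"
  shows "exp (lam * dur w) * cnorm r (run w \<psi>) \<le> M * cnorm r \<psi>"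
proof -
  have "exp (- lam * dur w) \<le> 1" using lam_pos dur_nonneg[OF assms(1)] by simp
  then have "M * exp (- lam * dur w) * cnorm r \<psi> \<le> M * 1 * cnorm r \<psi>"
    using M cnorm_nonneg[OF r assms(2)] by (intro mult_right_mono mult_left_mono) auto
  then show ?thesis using term_bound[OF assms] by simp
qed

lemma S_bdd: "\<psi> \<in> CC r \<Longrightarrow> bdd_above ((\<lambda>w. exp (lam * dur w) * cnorm r (run w \<psi>)) ` {w. okw w})"
  using term_bound2 unfolding bdd_above_def by blast

lemma S_ge: "okw w \<Longrightarrow> \<psi> \<in> CC r \<Longrightarrow> exp (lam * dur w) * cnorm r (run w \<psi>) \<le> S \<psi>"
  unfolding S_def by (rule cSUP_upper[OF _ S_bdd]) auto

lemma S_le: "(\<And>w. okw w \<Longrightarrow> exp (lam * dur w) * cnorm r (run w \<psi>) \<le> B) \<Longrightarrow> S \<psi> \<le> B"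
  unfolding S_def
proof (rule cSUP_least)
  show "{w. okw w} \<noteq> {}" using okw_Nil by blast
qed auto

lemma S_lower: "\<psi> \<in> CC r \<Longrightarrow> cnorm r \<psi> \<le> S \<psi>"
  using S_ge[of "[]" \<psi>] by simp

lemma S_upper: "\<psi> \<in> CC r \<Longrightarrow> S \<psi> \<le> M * cnorm r \<psi>"
  by (rule S_le) (rule term_bound2)

lemma S_step:
  assumes \<psi>: "\<psi> \<in> CC r" and h: "h \<ge> 0"
  shows "S (Tsg r f q h \<psi>) \<le> exp (- lam * h) * S \<psi>"
proof (rule S_le)
  fix w assume w: "okw w"
  have w': "okw ((q, h) # w)" using w h by simp
  have "exp (lam * dur w) * cnorm r (run w (Tsg r f q h \<psi>)) =
        exp (- lam * h) * (exp (lam * dur ((q, h) # w)) * cnorm r (run ((q, h) # w) \<psi>))"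
    by (simp add: exp_add[symmetric] algebra_simps)
  also have "\<dots> \<le> exp (- lam * h) * S \<psi>"
    by (rule mult_left_mono[OF S_ge[OF w' \<psi>]]) simp
  finally show "exp (lam * dur w) * cnorm r (run w (Tsg r f q h \<psi>)) \<le> exp (- lam * h) * S \<psi>" .
qed

lemma cnorm_neg: "\<phi> \<in> CC r \<Longrightarrow> cnorm r ((\<lambda>_. 0) - \<phi>) = cnorm r \<phi>"
  using cnorm_minus_commute[OF r CC_zero' , of \<phi>] by (simp add: cnorm_zero_diff)

lemma S_cont:
  assumes \<phi>: "\<phi> \<in> CC r" and \<epsilon>: "\<epsilon> > 0"
  shows "\<exists>\<delta>>0. \<forall>\<psi>\<in>CC r. cnorm r (\<psi> - \<phi>) < \<delta> \<longrightarrow> \<bar>S \<psi> - S \<phi>\<bar> \<le> \<epsilon>"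
proof -
  define A where "A = M * (2 * cnorm r \<phi> + 1)"
  have A: "A > 0" unfolding A_def using M cnorm_nonneg[OF r \<phi>] by simp
  define T where "T = max 0 (ln (A / \<epsilon>) / lam)"
  have T0: "T \<ge> 0" unfolding T_def by simp
  have eT: "exp (- lam * T) \<le> \<epsilon> / A"
  proof -
    have "ln (A / \<epsilon>) / lam \<le> T" unfolding T_def by simp
    then have "ln (A / \<epsilon>) \<le> T * lam" using lam_pos by (simp add: pos_divide_le_eq)
    then have "ln (A / \<epsilon>) \<le> lam * T" by (simp add: mult.commute)
    then have "exp (- lam * T) \<le> exp (- ln (A / \<epsilon>))" by simp
    also have "\<dots> = \<epsilon> / A" using A \<epsilon> by (simp add: exp_minus)
    finally show ?thesis .
  qed
  define \<delta> where "\<delta> = min 1 (\<epsilon> * exp (- (lam + L) * T))"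
  have \<delta>: "\<delta> > 0" unfolding \<delta>_def using \<epsilon> by simp
  have main: "\<bar>S \<psi> - S \<phi>\<bar> \<le> \<epsilon>" if \<psi>: "\<psi> \<in> CC r" and d: "cnorm r (\<psi> - \<phi>) < \<delta>" for \<psi>
  proof -
    have diff: "exp (lam * dur w) * cnorm r (run w \<psi> - run w \<phi>) \<le> \<epsilon>" if w: "okw w" for w
    proof (cases "dur w \<le> T")
      case True
      have "exp (lam * dur w) * cnorm r (run w \<psi> - run w \<phi>) \<le> exp (lam * dur w) * (exp (L * dur w) * cnorm r (\<psi> - \<phi>))"
        by (rule mult_left_mono[OF run_lip[OF w \<psi> \<phi>]]) simp
      also have "\<dots> = exp ((lam + L) * dur w) * cnorm r (\<psi> - \<phi>)"
        by (simp add: exp_add[symmetric] algebra_simps)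
      also have "\<dots> \<le> exp ((lam + L) * T) * \<delta>"
        using True lam_pos Lpos d cnorm_nonneg[OF r CC_diff[OF \<psi> \<phi>]]
        by (intro mult_mono) auto
      also have "\<dots> \<le> exp ((lam + L) * T) * (\<epsilon> * exp (- (lam + L) * T))"
        unfolding \<delta>_def by (intro mult_left_mono) auto
      also have "\<dots> = \<epsilon> * (exp ((lam + L) * T) * exp (- ((lam + L) * T)))" by (simp add: algebra_simps)
      also have "exp ((lam + L) * T) * exp (- ((lam + L) * T)) = 1" by (simp add: exp_minus)
      also have "\<epsilon> * 1 = \<epsilon>" by simp
      finally show ?thesis .
    next
      case False
      have np: "cnorm r \<psi> \<le> cnorm r \<phi> + 1"
        using cnorm_diff_ge[OF r \<psi> \<phi>] d unfolding \<delta>_def by linarith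
      have "cnorm r (run w \<psi> - run w \<phi>) \<le> cnorm r (run w \<psi> - (\<lambda>_. 0)) + cnorm r ((\<lambda>_. 0) - run w \<phi>)"
        by (rule cnorm_triangle[OF r run_CC[OF w \<psi>] CC_zero' run_CC[OF w \<phi>]])
      also have "\<dots> = cnorm r (run w \<psi>) + cnorm r (run w \<phi>)"
        by (simp add: cnorm_zero_diff cnorm_neg[OF run_CC[OF w \<phi>]])
      finally have "exp (lam * dur w) * cnorm r (run w \<psi> - run w \<phi>) \<le>
          exp (lam * dur w) * cnorm r (run w \<psi>) + exp (lam * dur w) * cnorm r (run w \<phi>)"
        by (simp add: distrib_left[symmetric])
      also have "\<dots> \<le> M * exp (- lam * dur w) * cnorm r \<psi> + M * exp (- lam * dur w) * cnorm r \<phi>"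
        by (intro add_mono term_bound w \<psi> \<phi>)
      also have "\<dots> = M * exp (- lam * dur w) * (cnorm r \<psi> + cnorm r \<phi>)" by (simp add: algebra_simps)
      also have "\<dots> \<le> M * exp (- lam * T) * (2 * cnorm r \<phi> + 1)"
        using False lam_pos M np cnorm_nonneg[OF r \<psi>] cnorm_nonneg[OF r \<phi>]
        by (intro mult_mono) auto
      also have "\<dots> = A * exp (- lam * T)" by (simp add: A_def)
      also have "\<dots> \<le> A * (\<epsilon> / A)" using eT A by (intro mult_left_mono) auto
      also have "\<dots> = \<epsilon>" using A by simp
      finally show ?thesis .
    qed
    have le1: "S \<psi> \<le> S \<phi> + \<epsilon>"
    proof (rule S_le)
      fix w assume w: "okw w"
      have "cnorm r (run w \<psi>) \<le> cnorm r (run w \<phi>) + cnorm r (run w \<psi> - run w \<phi>)"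
        using cnorm_diff_ge[OF r run_CC[OF w \<psi>] run_CC[OF w \<phi>]] by linarith
      then have "exp (lam * dur w) * cnorm r (run w \<psi>) \<le>
          exp (lam * dur w) * cnorm r (run w \<phi>) + exp (lam * dur w) * cnorm r (run w \<psi> - run w \<phi>)"
        by (simp add: distrib_left[symmetric])
      also have "\<dots> \<le> S \<phi> + \<epsilon>" by (intro add_mono S_ge[OF w \<phi>] diff[OF w])
      finally show "exp (lam * dur w) * cnorm r (run w \<psi>) \<le> S \<phi> + \<epsilon>" .
    qed
    have le2: "S \<phi> \<le> S \<psi> + \<epsilon>"
    proof (rule S_le)
      fix w assume w: "okw w"
      have "cnorm r (run w \<phi>) \<le> cnorm r (run w \<psi>) + cnorm r (run w \<psi> - run w \<phi>)"
        using cnorm_diff_ge[OF r run_CC[OF w \<psi>] run_CC[OF w \<phi>]] by linarith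
      then have "exp (lam * dur w) * cnorm r (run w \<phi>) \<le>
          exp (lam * dur w) * cnorm r (run w \<psi>) + exp (lam * dur w) * cnorm r (run w \<psi> - run w \<phi>)"
        by (simp add: distrib_left[symmetric])
      also have "\<dots> \<le> S \<psi> + \<epsilon>" by (intro add_mono S_ge[OF w \<psi>] diff[OF w])
      finally show "exp (lam * dur w) * cnorm r (run w \<phi>) \<le> S \<psi> + \<epsilon>" .
    qed
    show ?thesis using le1 le2 by linarith
  qed
  show ?thesis using \<delta> main by blast
qed

lemma S_nonneg: "\<psi> \<in> CC r \<Longrightarrow> S \<psi> \<ge> 0"
  using S_lower cnorm_nonneg[OF r] order_trans by blast

lemma exp_quot_lim: "((\<lambda>h. (exp (- lam * h) - 1) / h) \<longlongrightarrow> - lam) (at_right 0)"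
proof -
  have "((\<lambda>h. exp (- lam * h)) has_real_derivative (- lam)) (at 0)"
    by (auto intro!: derivative_eq_intros)
  then have "((\<lambda>h. (exp (- lam * (0 + h)) - exp (- lam * 0)) / h) \<longlongrightarrow> - lam) (at 0)"
    by (rule DERIV_D)
  then have "((\<lambda>h. (exp (- lam * h) - 1) / h) \<longlongrightarrow> - lam) (at 0)" by simp
  then show ?thesis by (rule tendsto_mono[OF at_le[OF subset_UNIV]])
qed

lemma V_Dini:
  assumes \<psi>: "\<psi> \<in> CC r"
  shows "Dini_up r f q (\<lambda>\<psi>. S \<psi> / lam) \<psi> \<le> ereal (- (cnorm r \<psi> powr 1))"
proof -
  have n\<psi>: "cnorm r \<psi> \<ge> 0" by (rule cnorm_nonneg[OF r \<psi>])
  have "Dini_up r f q (\<lambda>\<psi>. S \<psi> / lam) \<psi> \<le> ereal (- cnorm r \<psi>)"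
  proof (rule DC2)
    fix \<epsilon> :: real assume \<epsilon>: "\<epsilon> > 0"
    define v where "v = S \<psi> / lam"
    have v0: "v \<ge> 0" unfolding v_def using S_nonneg[OF \<psi>] lam_pos by simp
    define \<eta> where "\<eta> = \<epsilon> / (v + 1)"
    have \<eta>: "\<eta> > 0" unfolding \<eta>_def using \<epsilon> v0 by simp
    have "eventually (\<lambda>h. (exp (- lam * h) - 1) / h < - lam + \<eta>) (at_right (0::real))"
      by (rule order_tendstoD(2)[OF exp_quot_lim]) (use \<eta> in simp)
    then obtain b where b: "b > 0" and
      B: "\<forall>h>0. h < b \<longrightarrow> (exp (- lam * h) - 1) / h < - lam + \<eta>"
      unfolding eventually_at_right_field by auto
    have "(S (Tsg r f q h \<psi>) / lam - S \<psi> / lam) / h \<le> - cnorm r \<psi> + \<epsilon>" if h: "0 < h" "h < b" for h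
    proof -
      have "S (Tsg r f q h \<psi>) \<le> exp (- lam * h) * S \<psi>" using S_step[OF \<psi>] h by simp
      then have "S (Tsg r f q h \<psi>) / lam \<le> exp (- lam * h) * v"
        unfolding v_def using lam_pos by (simp add: divide_right_mono)
      then have "(S (Tsg r f q h \<psi>) / lam - S \<psi> / lam) / h \<le> (exp (- lam * h) * v - v) / h"
        using h unfolding v_def by (simp add: divide_right_mono)
      also have "\<dots> = ((exp (- lam * h) - 1) / h) * v" by (simp add: algebra_simps)
      also have "\<dots> \<le> (- lam + \<eta>) * v" using B h v0 by (intro mult_right_mono) auto
      also have "\<dots> = - (lam * v) + \<eta> * v" by (simp add: algebra_simps)
      also have "lam * v = S \<psi>" unfolding v_def using lam_pos by simp
      also have "\<eta> * v \<le> \<epsilon>"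
      proof -
        have "\<eta> * v = \<epsilon> * (v / (v + 1))" by (simp add: \<eta>_def)
        also have "\<dots> \<le> \<epsilon> * 1" using v0 \<epsilon> by (intro mult_left_mono) auto
        finally show ?thesis by simp
      qed
      then have "- S \<psi> + \<eta> * v \<le> - cnorm r \<psi> + \<epsilon>" using S_lower[OF \<psi>] by linarith
      finally show ?thesis .
    qed
    then show "\<exists>\<delta>>0. \<forall>h. 0 < h \<and> h < \<delta> \<longrightarrow> (S (Tsg r f q h \<psi>) / lam - S \<psi> / lam) / h \<le> - cnorm r \<psi> + \<epsilon>"
      using b by blast
  qed
  then show ?thesis using n\<psi> by (simp add: powr_one)
qed

lemma V_cont: "ccont r (\<lambda>\<psi>. S \<psi> / lam)"
  unfolding ccont_def
proof (intro ballI allI impI)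
  fix \<phi> :: "real \<Rightarrow> real^'n" and \<epsilon> :: real assume \<phi>: "\<phi> \<in> CC r" and \<epsilon>: "\<epsilon> > 0"
  obtain \<delta> where \<delta>: "\<delta> > 0" and D: "\<forall>\<psi>\<in>CC r. cnorm r (\<psi> - \<phi>) < \<delta> \<longrightarrow> \<bar>S \<psi> - S \<phi>\<bar> \<le> \<epsilon> * lam / 2"
    using S_cont[OF \<phi>, of "\<epsilon> * lam / 2"] \<epsilon> lam_pos by auto
  have "dist (S \<psi> / lam) (S \<phi> / lam) < \<epsilon>" if "\<psi> \<in> CC r" "cnorm r (\<psi> - \<phi>) < \<delta>" for \<psi>
  proof -
    have "\<bar>S \<psi> - S \<phi>\<bar> \<le> \<epsilon> * lam / 2" using D that by blast
    then have "\<bar>S \<psi> - S \<phi>\<bar> / lam \<le> \<epsilon> / 2" using lam_pos by (simp add: field_simps)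
    moreover have "dist (S \<psi> / lam) (S \<phi> / lam) = \<bar>S \<psi> - S \<phi>\<bar> / lam"
      using lam_pos by (simp add: dist_real_def diff_divide_distrib[symmetric])
    moreover have "\<epsilon> / 2 < \<epsilon>" using \<epsilon> by simp
    ultimately show ?thesis by (metis le_less_trans)
  qed
  then show "\<exists>\<delta>>0. \<forall>\<psi>\<in>CC r. cnorm r (\<psi> - \<phi>) < \<delta> \<longrightarrow> dist (S \<psi> / lam) (S \<phi> / lam) < \<epsilon>"
    using \<delta> by blast
qed

lemma I1_ctx:
  "\<exists>V p cl cu. ccont r V \<and> (\<forall>\<psi>\<in>CC r. V \<psi> \<ge> 0) \<and> p > 0 \<and> cl > 0 \<and> cu > 0 \<and>
              (\<forall>\<psi>\<in>CC r. cl * cnorm r \<psi> powr p \<le> V \<psi> \<and> V \<psi> \<le> cu * cnorm r \<psi> powr p) \<and>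
              (\<forall>\<psi>\<in>CC r. \<forall>q. Dini_up r f q V \<psi> \<le> ereal (- (cnorm r \<psi> powr p)))"
proof (intro exI conjI ballI allI)
  show "ccont r (\<lambda>\<psi>. S \<psi> / lam)" by (rule V_cont)
  show "(1::real) > 0" by simp
  show "1 / lam > 0" using lam_pos by simp
  show "M / lam > 0" using lam_pos M by simp
next
  fix \<psi> :: "real \<Rightarrow> real^'n" assume \<psi>: "\<psi> \<in> CC r"
  have n\<psi>: "cnorm r \<psi> \<ge> 0" by (rule cnorm_nonneg[OF r \<psi>])
  show "S \<psi> / lam \<ge> 0" using S_nonneg[OF \<psi>] lam_pos by simp
  show "1 / lam * cnorm r \<psi> powr 1 \<le> S \<psi> / lam"
    using S_lower[OF \<psi>] lam_pos n\<psi> by (simp add: powr_one divide_right_mono)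
  show "S \<psi> / lam \<le> M / lam * cnorm r \<psi> powr 1"
    using S_upper[OF \<psi>] lam_pos n\<psi> by (simp add: powr_one divide_right_mono)
  fix q
  show "Dini_up r f q (\<lambda>\<psi>. S \<psi> / lam) \<psi> \<le> ereal (- (cnorm r \<psi> powr 1))" by (rule V_Dini[OF \<psi>])
qed

end

lemma I1:
  assumes "UGES r f"
  shows "\<exists>V p cl cu. ccont r V \<and> (\<forall>\<psi>\<in>CC r. V \<psi> \<ge> 0) \<and> p > 0 \<and> cl > 0 \<and> cu > 0 \<and>
              (\<forall>\<psi>\<in>CC r. cl * cnorm r \<psi> powr p \<le> V \<psi> \<and> V \<psi> \<le> cu * cnorm r \<psi> powr p) \<and>
              (\<forall>\<psi>\<in>CC r. \<forall>q. Dini_up r f q V \<psi> \<le> ereal (- (cnorm r \<psi> powr p)))"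
proof -
  obtain M lam0 where M: "M > 0" "lam0 > 0" and
    U: "\<forall>w \<psi>. okw w \<longrightarrow> \<psi> \<in> CC r \<longrightarrow> cnorm r (run w \<psi>) \<le> M * exp (- lam0 * dur w) * cnorm r \<psi>"
    using assms unfolding UGES_iff by blast
  show ?thesis by (rule I1_ctx[OF M]) (use U in blast)
qed

end

theorem theorem7:
  fixes r :: real and f :: "'q \<Rightarrow> (real \<Rightarrow> real^'n) \<Rightarrow> real^'n"
  assumes r: "r \<ge> 0"
    and fcont: "\<And>q. ccont r (f q)"
    and f0: "\<And>q. f q (\<lambda>_. 0) = 0"
    and ex: "\<And>q \<phi>. \<phi> \<in> CC r \<Longrightarrow> \<exists>x. is_sol r f q \<phi> x"
    and uniq: "\<And>q \<phi> x y t. \<phi> \<in> CC r \<Longrightarrow> is_sol r f q \<phi> x \<Longrightarrow> is_sol r f q \<phi> y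
                 \<Longrightarrow> t \<ge> -r \<Longrightarrow> x t = y t"
    and lip: "\<exists>L>0. \<forall>q. \<forall>\<psi>1\<in>CC r. \<forall>\<psi>2\<in>CC r.
                 norm (f q \<psi>1 - f q \<psi>2) \<le> L * cnorm r (\<psi>1 - \<psi>2)"
  shows "(UGES r f \<longleftrightarrow>
           (\<exists>V p cl cu. ccont r V \<and> (\<forall>\<psi>\<in>CC r. V \<psi> \<ge> 0) \<and> p > 0 \<and> cl > 0 \<and> cu > 0 \<and>
              (\<forall>\<psi>\<in>CC r. cl * cnorm r \<psi> powr p \<le> V \<psi> \<and> V \<psi> \<le> cu * cnorm r \<psi> powr p) \<and>
              (\<forall>\<psi>\<in>CC r. \<forall>q. Dini_up r f q V \<psi> \<le> ereal (- (cnorm r \<psi> powr p)))))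
       \<and> (UGES r f \<longleftrightarrow>
           (\<exists>V p c. (\<forall>\<psi>\<in>CC r. V \<psi> \<ge> 0) \<and> p > 0 \<and> c > 0 \<and>
              (\<forall>\<psi>\<in>CC r. \<forall>q. \<forall>t>0. continuous (at_left t) (\<lambda>s. V (Tsg r f q s \<psi>))) \<and>
              (\<forall>\<psi>\<in>CC r. \<forall>q. Dini_up r f q V \<psi> \<le> ereal (- (cnorm r \<psi> powr p))) \<and>
              (\<forall>\<psi>\<in>CC r. V \<psi> \<le> c * cnorm r \<psi> powr p)))"
proof -
  obtain L where L: "L > 0" and lipL: "\<forall>q. \<forall>\<psi>1\<in>CC r. \<forall>\<psi>2\<in>CC r.
                 norm (f q \<psi>1 - f q \<psi>2) \<le> L * cnorm r (\<psi>1 - \<psi>2)"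
    using lip by blast
  have "sys r f L"
  proof (unfold_locales)
    show "r \<ge> 0" by (rule r)
    show "\<And>q. f q (\<lambda>_. 0) = 0" by (rule f0)
    show "\<And>q \<phi>. \<phi> \<in> CC r \<Longrightarrow> \<exists>x. is_sol r f q \<phi> x" by (rule ex)
    show "\<And>q \<phi> x y t. \<phi> \<in> CC r \<Longrightarrow> is_sol r f q \<phi> x \<Longrightarrow> is_sol r f q \<phi> y \<Longrightarrow> t \<ge> -r \<Longrightarrow> x t = y t"
      by (rule uniq)
    show "L > 0" by (rule L)
    show "\<And>q \<psi>1 \<psi>2. \<psi>1 \<in> CC r \<Longrightarrow> \<psi>2 \<in> CC r \<Longrightarrow> norm (f q \<psi>1 - f q \<psi>2) \<le> L * cnorm r (\<psi>1 - \<psi>2)"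
      using lipL by blast
  qed
  then interpret sys r f L .
  show ?thesis
  proof (intro conjI iffI)
    assume "UGES r f" then show "\<exists>V p cl cu. ccont r V \<and> (\<forall>\<psi>\<in>CC r. V \<psi> \<ge> 0) \<and> p > 0 \<and> cl > 0 \<and> cu > 0 \<and>
              (\<forall>\<psi>\<in>CC r. cl * cnorm r \<psi> powr p \<le> V \<psi> \<and> V \<psi> \<le> cu * cnorm r \<psi> powr p) \<and>
              (\<forall>\<psi>\<in>CC r. \<forall>q. Dini_up r f q V \<psi> \<le> ereal (- (cnorm r \<psi> powr p)))"
      by (rule I1)
  next
    assume "\<exists>V p cl cu. ccont r V \<and> (\<forall>\<psi>\<in>CC r. V \<psi> \<ge> 0) \<and> p > 0 \<and> cl > 0 \<and> cu > 0 \<and>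
              (\<forall>\<psi>\<in>CC r. cl * cnorm r \<psi> powr p \<le> V \<psi> \<and> V \<psi> \<le> cu * cnorm r \<psi> powr p) \<and>
              (\<forall>\<psi>\<in>CC r. \<forall>q. Dini_up r f q V \<psi> \<le> ereal (- (cnorm r \<psi> powr p)))"
    then show "UGES r f" by (rule I3[OF I2])
  next
    assume "UGES r f" then show "\<exists>V p c. (\<forall>\<psi>\<in>CC r. V \<psi> \<ge> 0) \<and> p > 0 \<and> c > 0 \<and>
              (\<forall>\<psi>\<in>CC r. \<forall>q. \<forall>t>0. continuous (at_left t) (\<lambda>s. V (Tsg r f q s \<psi>))) \<and>
              (\<forall>\<psi>\<in>CC r. \<forall>q. Dini_up r f q V \<psi> \<le> ereal (- (cnorm r \<psi> powr p))) \<and>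
              (\<forall>\<psi>\<in>CC r. V \<psi> \<le> c * cnorm r \<psi> powr p)"
      by (rule I2[OF I1])
  next
    assume "\<exists>V p c. (\<forall>\<psi>\<in>CC r. V \<psi> \<ge> 0) \<and> p > 0 \<and> c > 0 \<and>
              (\<forall>\<psi>\<in>CC r. \<forall>q. \<forall>t>0. continuous (at_left t) (\<lambda>s. V (Tsg r f q s \<psi>))) \<and>
              (\<forall>\<psi>\<in>CC r. \<forall>q. Dini_up r f q V \<psi> \<le> ereal (- (cnorm r \<psi> powr p))) \<and>
              (\<forall>\<psi>\<in>CC r. V \<psi> \<le> c * cnorm r \<psi> powr p)"
    then show "UGES r f" by (rule I3)
  qed
qed

end
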